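(* Every element of $F_\tau$ can be written as a product $$a_{i_1}a_{i_2}\cdots a_{i_n}\,b_{j_m}^{-1}\cdots b_{j_2}^{-1}b_{j_1}^{-1}$$ with $n,m\ge0$, where each $a_{i_k}\in\{x_{i_k},y_{i_k}\}$ and each $b_{j_k}\in\{x_{j_k},y_{j_k}\}$, and $i_1\le i_2\le\dots\le i_n$, $j_1\le j_2\le\dots\le j_m$.
   Context: Let $\tau=(\sqrt5-1)/2$. $F_\tau$ is the group, under composition, of orientation-preserving piecewise linear homeomorphisms of $[0,1]$ with finitely many breakpoints, all in $\mathbb{Z}[\tau]$, and slopes integer powers of $\tau$; $gh$ means first $g$ then $h$. Trees: finite rooted binary trees whose carets are each labelled $x$-type or $y$-type; the root corresponds to $[0,1]$, and at a vertex with interval $[p,p+\tau^k]$ an $x$-type caret gives children $[p,p+\tau^{k+2}]$, $[p+\tau^{k+2},p+\tau^k]$ while a $y$-type caret gives $[p,p+\tau^{k+1}]$, $[p+\tau^{k+1},p+\tau^k]$ (left, right). Leaves are numbered $0,1,\dots$ from left to right; a pair $(T_1,T_2)$ with equally many leaves represents the element mapping the $i$-th leaf interval of $T_1$ affinely increasingly onto that of $T_2$. A spine is a tree with only $x$-type carets, each non-root caret being the right child of its parent. $x_n$ ($n\ge0$) is represented by $(A,B)$, $B$ the spine with $n+2$ carets, $A$ the spine with $n+1$ carets with an $x$-type caret attached to leaf $n$; $y_n$ likewise with a $y$-type attached caret. *)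

theory Defs
  imports Complex_Main
begin

definition tau :: real where "tau = (sqrt 5 - 1) / 2"

definition Ztau :: "real set" where
  "Ztau = {of_int a + of_int b * tau | a b. True}"

definition F_tau :: "(real \<Rightarrow> real) set" where
  "F_tau = {f. (\<exists>ps :: real list. length ps \<ge> 2 \<and> sorted_wrt (<) ps \<and>
                 hd ps = 0 \<and> last ps = 1 \<and> set ps \<subseteq> Ztau \<and>
                 (\<forall>i < length ps - 1. \<exists>(k::int) (c::real).
                    \<forall>t \<in> {ps ! i .. ps ! (i+1)}. f t = tau powi k * t + c))
              \<and> continuous_on {0..1} f \<and> strict_mono_on {0..1} f \<and> f ` {0..1} = {0..1}
              \<and> (\<forall>t. t \<notin> {0..1} \<longrightarrow> f t = t)}"

datatype ctree = Leaf | XC ctree ctree | YC ctree ctree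

text \<open>Leaf intervals, left to right; (p,k) denotes [p, p + tau^k].\<close>
fun leaves :: "ctree \<Rightarrow> real \<Rightarrow> int \<Rightarrow> (real \<times> int) list" where
  "leaves Leaf p k = [(p, k)]"
| "leaves (XC l r) p k = leaves l p (k+2) @ leaves r (p + tau powi (k+2)) (k+1)"
| "leaves (YC l r) p k = leaves l p (k+1) @ leaves r (p + tau powi (k+1)) (k+2)"

fun nleaves :: "ctree \<Rightarrow> nat" where
  "nleaves Leaf = 1"
| "nleaves (XC l r) = nleaves l + nleaves r"
| "nleaves (YC l r) = nleaves l + nleaves r"

text \<open>Replace the i-th leaf (numbered from 0, left to right) by the tree S.\<close>
fun replace_leaf :: "ctree \<Rightarrow> nat \<Rightarrow> ctree \<Rightarrow> ctree" where
  "replace_leaf Leaf i S = (if i = 0 then S else Leaf)"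
| "replace_leaf (XC l r) i S = (if i < nleaves l then XC (replace_leaf l i S) r
                                else XC l (replace_leaf r (i - nleaves l) S))"
| "replace_leaf (YC l r) i S = (if i < nleaves l then YC (replace_leaf l i S) r
                                else YC l (replace_leaf r (i - nleaves l) S))"

fun spine :: "nat \<Rightarrow> ctree" where
  "spine 0 = Leaf"
| "spine (Suc c) = XC Leaf (spine c)"

definition tree_elem :: "ctree \<Rightarrow> ctree \<Rightarrow> real \<Rightarrow> real" where
  "tree_elem T1 T2 t =
     (let L1 = leaves T1 0 0; L2 = leaves T2 0 0 in
      if \<exists>i < length L1. fst (L1!i) \<le> t \<and> t \<le> fst (L1!i) + tau powi snd (L1!i)
      then (let i = (LEAST i. i < length L1 \<and> fst (L1!i) \<le> t \<and> t \<le> fst (L1!i) + tau powi snd (L1!i))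
            in fst (L2!i) + tau powi (snd (L2!i) - snd (L1!i)) * (t - fst (L1!i)))
      else t)"

definition xgen :: "nat \<Rightarrow> real \<Rightarrow> real" where
  "xgen n = tree_elem (replace_leaf (spine (n+1)) n (XC Leaf Leaf)) (spine (n+2))"

definition ygen :: "nat \<Rightarrow> real \<Rightarrow> real" where
  "ygen n = tree_elem (replace_leaf (spine (n+1)) n (YC Leaf Leaf)) (spine (n+2))"

definition gen :: "bool \<times> nat \<Rightarrow> real \<Rightarrow> real" where
  "gen a = (if fst a then xgen (snd a) else ygen (snd a))"

text \<open>Product of a word, with the convention gh = first g then h.\<close>
fun gprod :: "(real \<Rightarrow> real) list \<Rightarrow> real \<Rightarrow> real" where
  "gprod [] = id"
| "gprod (g # gs) = gprod gs \<circ> g"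

end

theory Submission
  imports Defs
begin


lemma tau_pos: "tau > 0"
  unfolding tau_def by (simp add: real_less_rsqrt)

lemma tau_lt1: "tau < 1"
proof -
  have "sqrt 5 < sqrt 9" by (rule real_sqrt_less_mono) simp
  then have "sqrt 5 < 3" by simp
  then show ?thesis unfolding tau_def by simp
qed

lemma tau_sq: "tau * tau + tau = 1"
proof -
  have s: "sqrt 5 * sqrt 5 = 5" by simp
  show ?thesis unfolding tau_def by (simp add: field_simps s algebra_simps)
qed

definition tp :: "int \<Rightarrow> real" where "tp k = tau powi k"

lemma tp_pos: "tp k > 0" unfolding tp_def using tau_pos by simp

lemma tp_add: "tp (a + b) = tp a * tp b"
  unfolding tp_def using tau_pos by (simp add: power_int_add)

lemma tp_0[simp]: "tp 0 = 1" unfolding tp_def by simp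
lemma tp_1: "tp 1 = tau" unfolding tp_def by simp

lemma tp_split: "tp (a+2) + tp (a+1) = tp a"
proof -
  have "tp (a+2) = tp a * (tau*tau)" using tp_add[of a 2] by (simp add: tp_def power2_eq_square)
  moreover have "tp (a+1) = tp a * tau" using tp_add[of a 1] by (simp add: tp_1)
  ultimately have "tp (a+2) + tp (a+1) = tp a * (tau*tau + tau)" by (simp add: algebra_simps)
  then show ?thesis using tau_sq by simp
qed

lemma tp_split': "tp (a+1) + tp (a+2) = tp a" using tp_split[of a] by linarith



definition val :: "int list \<Rightarrow> real" where "val e = sum_list (map tp e)"
definition pos :: "int list \<Rightarrow> nat \<Rightarrow> real" where "pos e i = sum_list (map tp (take i e))"

lemma val_simps[simp]: "val [] = 0" "val (a#e) = tp a + val e" "val (u@v) = val u + val v"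
  by (auto simp: val_def)

lemma val_nonneg: "0 \<le> val e"
  unfolding val_def by (rule sum_list_nonneg) (auto intro: less_imp_le tp_pos)

lemma val_pos: "e \<noteq> [] \<Longrightarrow> 0 < val e"
  by (cases e) (auto intro: add_pos_nonneg tp_pos val_nonneg)

lemma pos_0[simp]: "pos e 0 = 0" by (simp add: pos_def)

lemma pos_Cons_Suc[simp]: "pos (a#e) (Suc i) = tp a + pos e i" by (simp add: pos_def)

lemma pos_Suc: "i < length e \<Longrightarrow> pos e (Suc i) = pos e i + tp (e!i)"
  unfolding pos_def by (simp add: take_Suc_conv_app_nth)

lemma pos_len: "pos e (length e) = val e" by (simp add: pos_def val_def)

lemma pos_nonneg: "0 \<le> pos e i"
  unfolding pos_def by (rule sum_list_nonneg) (auto intro: less_imp_le tp_pos)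

lemma pos_mono: "i \<le> j \<Longrightarrow> pos e i \<le> pos e j"
proof -
  assume "i \<le> j"
  then obtain n where j: "j = i + n" using le_Suc_ex by blast
  have "take j e = take i e @ take n (drop i e)" unfolding j by (simp add: take_add)
  then have "pos e j = pos e i + val (take n (drop i e))" by (simp add: pos_def val_def)
  then show ?thesis using val_nonneg[of "take n (drop i e)"] by simp
qed

lemma pos_strict: "i < j \<Longrightarrow> j \<le> length e \<Longrightarrow> pos e i < pos e j"
proof -
  assume a: "i < j" "j \<le> length e"
  then have "pos e (Suc i) \<le> pos e j" by (intro pos_mono) simp
  moreover have "pos e (Suc i) = pos e i + tp (e!i)" using a by (intro pos_Suc) simp
  ultimately show ?thesis using tp_pos[of "e!i"] by simp
qed

lemma pos_le_val: "pos e i \<le> val e"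
proof -
  have "val e = pos e i + val (drop i e)"
    by (metis append_take_drop_id pos_def val_def val_simps(3))
  then show ?thesis using val_nonneg[of "drop i e"] by simp
qed

lemma pos_append: "pos (u @ v) i = (if i \<le> length u then pos u i else val u + pos v (i - length u))"
  by (auto simp: pos_def val_def)

fun mkpos :: "real \<Rightarrow> int list \<Rightarrow> (real \<times> int) list" where
  "mkpos p [] = []"
| "mkpos p (a#e) = (p,a) # mkpos (p + tp a) e"

lemma length_mkpos[simp]: "length (mkpos p e) = length e"
  by (induction e arbitrary: p) auto

lemma mkpos_nth: "i < length e \<Longrightarrow> mkpos p e ! i = (p + pos e i, e!i)"
  by (induction e arbitrary: p i) (auto simp: nth_Cons split: nat.split)

lemma mkpos_append: "mkpos p (u@v) = mkpos p u @ mkpos (p + val u) v"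
  by (induction u arbitrary: p) (auto simp: algebra_simps)

definition elemL :: "(real \<times> int) list \<Rightarrow> (real \<times> int) list \<Rightarrow> real \<Rightarrow> real" where
  "elemL L1 L2 t =
      (if \<exists>i < length L1. fst (L1!i) \<le> t \<and> t \<le> fst (L1!i) + tau powi snd (L1!i)
      then (let i = (LEAST i. i < length L1 \<and> fst (L1!i) \<le> t \<and> t \<le> fst (L1!i) + tau powi snd (L1!i))
            in fst (L2!i) + tau powi (snd (L2!i) - snd (L1!i)) * (t - fst (L1!i)))
      else t)"

lemma tree_elem_eq: "tree_elem T1 T2 = elemL (leaves T1 0 0) (leaves T2 0 0)"
  by (rule ext) (simp add: tree_elem_def elemL_def Let_def)

definition E :: "int list \<Rightarrow> int list \<Rightarrow> real \<Rightarrow> real" where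
  "E e1 e2 = elemL (mkpos 0 e1) (mkpos 0 e2)"

lemma E_piece:
  assumes len: "length e2 = length e1" and i: "i < length e1"
    and t1: "pos e1 i \<le> t" and t2: "t \<le> pos e1 i + tp (e1!i)"
  shows "E e1 e2 t = pos e2 i + tp (e2!i - e1!i) * (t - pos e1 i)"
proof -
  define P where "P = (\<lambda>j. j < length e1 \<and> pos e1 j \<le> t \<and> t \<le> pos e1 j + tp (e1!j))"
  have Pi: "P i" using i t1 t2 by (simp add: P_def)
  have ex: "\<exists>i < length (mkpos 0 e1). fst (mkpos 0 e1 ! i) \<le> t \<and> t \<le> fst (mkpos 0 e1 ! i) + tau powi snd (mkpos 0 e1 ! i)"
    using i t1 t2 by (auto simp: mkpos_nth tp_def)
  have L: "(\<lambda>j. j < length (mkpos 0 e1) \<and> fst (mkpos 0 e1 ! j) \<le> t \<and> t \<le> fst (mkpos 0 e1 ! j) + tau powi snd (mkpos 0 e1 ! j)) = P"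
    by (rule ext) (auto simp: P_def mkpos_nth tp_def)
  define j where "j = (LEAST j. P j)"
  have Pj: "P j" using Pi unfolding j_def by (rule LeastI)
  have ji: "j \<le> i" using Pi unfolding j_def by (rule Least_le)
  have jl: "j < length e1" using Pj P_def by simp
  have val_j: "E e1 e2 t = pos e2 j + tp (e2!j - e1!j) * (t - pos e1 j)"
    using ex L jl len unfolding E_def elemL_def j_def by (simp add: mkpos_nth tp_def Let_def)
  show ?thesis
  proof (cases "j = i")
    case True then show ?thesis using val_j by simp
  next
    case False
    then have ji': "j < i" using ji by simp
    have sj: "pos e1 (Suc j) = pos e1 j + tp (e1!j)" using jl by (rule pos_Suc)
    have i_eq: "i = Suc j"
    proof (rule ccontr)
      assume "i \<noteq> Suc j"
      then have "Suc j < i" using ji' by simp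
      then have "pos e1 (Suc j) < pos e1 i" using i by (intro pos_strict) auto
      then show False using Pj t1 sj unfolding P_def by linarith
    qed
    have "t \<le> pos e1 (Suc j)" using Pj sj unfolding P_def by simp
    then have teq: "t = pos e1 i" using t1 i_eq by simp
    have s2: "pos e2 (Suc j) = pos e2 j + tp (e2!j)" using jl len by (intro pos_Suc) simp
    have "tp (e2!j - e1!j) * tp (e1!j) = tp (e2!j)" using tp_add[of "e2!j - e1!j" "e1!j"] by simp
    then show ?thesis using val_j teq i_eq sj s2 by simp
  qed
qed

lemma E_out:
  assumes v: "val e1 = 1" and t: "t < 0 \<or> t > 1"
  shows "E e1 e2 t = t"
proof -
  have "\<not> (\<exists>i < length (mkpos 0 e1). fst (mkpos 0 e1 ! i) \<le> t \<and> t \<le> fst (mkpos 0 e1 ! i) + tau powi snd (mkpos 0 e1 ! i))"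
  proof
    assume "\<exists>i < length (mkpos 0 e1). fst (mkpos 0 e1 ! i) \<le> t \<and> t \<le> fst (mkpos 0 e1 ! i) + tau powi snd (mkpos 0 e1 ! i)"
    then obtain i where i: "i < length e1" "pos e1 i \<le> t" "t \<le> pos e1 i + tp (e1!i)"
      by (auto simp: mkpos_nth tp_def)
    have "pos e1 i + tp (e1!i) = pos e1 (Suc i)" using i by (simp add: pos_Suc)
    also have "\<dots> \<le> 1" using pos_le_val[of e1 "Suc i"] v by simp
    finally show False using i t pos_nonneg[of e1 i] by linarith
  qed
  then show ?thesis unfolding E_def elemL_def by (rule if_not_P)
qed

lemma cover:
  assumes "0 \<le> t" "t \<le> val e" "e \<noteq> []"
  shows "\<exists>i<length e. pos e i \<le> t \<and> t \<le> pos e i + tp (e!i)"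
  using assms
proof (induction e arbitrary: t)
  case Nil then show ?case by simp
next
  case (Cons a e)
  show ?case
  proof (cases "t \<le> tp a")
    case True then show ?thesis using Cons.prems by (intro exI[of _ 0]) auto
  next
    case False
    then have ne: "e \<noteq> []" using Cons.prems by auto
    have "0 \<le> t - tp a" "t - tp a \<le> val e" using False Cons.prems by auto
    from Cons.IH[OF this ne] obtain i where "i<length e" "pos e i \<le> t - tp a" "t - tp a \<le> pos e i + tp (e!i)"
      by blast
    then show ?thesis by (intro exI[of _ "Suc i"]) auto
  qed
qed

lemma E_ext:
  assumes len: "length e2 = length e1" and v: "val e1 = 1"
   and out: "\<And>t. t < 0 \<or> t > 1 \<Longrightarrow> g t = t"
   and pc: "\<And>i t. i < length e1 \<Longrightarrow> pos e1 i \<le> t \<Longrightarrow> t \<le> pos e1 i + tp (e1!i) \<Longrightarrow>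
              g t = pos e2 i + tp (e2!i - e1!i) * (t - pos e1 i)"
  shows "g = E e1 e2"
proof
  fix t
  have ne: "e1 \<noteq> []" using v by auto
  show "g t = E e1 e2 t"
  proof (cases "t < 0 \<or> t > 1")
    case True then show ?thesis using out E_out[OF v] by simp
  next
    case False
    then obtain i where "i<length e1" "pos e1 i \<le> t" "t \<le> pos e1 i + tp (e1!i)"
      using cover[of t e1] v ne by fastforce
    then show ?thesis using pc E_piece[OF len] by simp
  qed
qed

lemma E_comp:
  assumes l2: "length e2 = length e1" and l3: "length e3 = length e1" and v1: "val e1 = 1" and v2: "val e2 = 1"
  shows "E e2 e3 \<circ> E e1 e2 = E e1 e3"
proof (rule E_ext[OF l3 v1])
  fix t :: real assume "t < 0 \<or> t > 1"
  then show "(E e2 e3 \<circ> E e1 e2) t = t" using E_out[OF v1] E_out[OF v2] by simp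
next
  fix i t assume i: "i < length e1" and t: "pos e1 i \<le> t" "t \<le> pos e1 i + tp (e1!i)"
  define y where "y = pos e2 i + tp (e2!i - e1!i) * (t - pos e1 i)"
  have Ey: "E e1 e2 t = y" using E_piece[OF l2 i t] y_def by simp
  have m: "tp (e2!i - e1!i) * tp (e1!i) = tp (e2!i)" using tp_add[of "e2!i - e1!i" "e1!i"] by simp
  have "tp (e2!i - e1!i) * (t - pos e1 i) \<le> tp (e2!i - e1!i) * tp (e1!i)"
    using t tp_pos[of "e2!i - e1!i"] by (intro mult_left_mono) auto
  then have y2: "y \<le> pos e2 i + tp (e2!i)" using m y_def by simp
  have y1: "pos e2 i \<le> y" using t tp_pos[of "e2!i - e1!i"] y_def by simp
  have "E e2 e3 y = pos e3 i + tp (e3!i - e2!i) * (y - pos e2 i)"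
    using E_piece[of e3 e2 i y] l2 l3 i y1 y2 by simp
  also have "\<dots> = pos e3 i + tp (e3!i - e1!i) * (t - pos e1 i)"
    using tp_add[of "e3!i - e2!i" "e2!i - e1!i"] y_def by simp
  finally show "(E e2 e3 \<circ> E e1 e2) t = pos e3 i + tp (e3!i - e1!i) * (t - pos e1 i)"
    using Ey by simp
qed

lemma E_id: assumes "val e = 1" shows "E e e = id"
  by (rule E_ext[symmetric]) (auto simp: assms)

lemma E_bij:
  assumes "length e2 = length e1" "val e1 = 1" "val e2 = 1"
  shows "bij (E e1 e2)" "inv (E e1 e2) = E e2 e1"
proof -
  have a: "E e2 e1 \<circ> E e1 e2 = id" using E_comp[of e2 e1 e1] E_id assms by simp
  have b: "E e1 e2 \<circ> E e2 e1 = id" using E_comp[of e1 e2 e2] E_id assms by simp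
  show "bij (E e1 e2)" using a b by (rule o_bij)
  show "inv (E e1 e2) = E e2 e1" using b a by (rule inv_unique_comp)
qed



lemma pos_app_left: "i \<le> length u \<Longrightarrow> pos (u@v) i = pos u i"
  by (simp add: pos_append)

lemma pos_app_right: "pos (u@v) (length u + j) = val u + pos v j"
  by (simp add: pos_append pos_len)

lemma tp_d: "tp d1 + tp d2 = 1 \<Longrightarrow> tp (a+d1) + tp (a+d2) = tp a"
  by (metis distrib_left mult.right_neutral tp_add)

lemma E_refine_gen:
  assumes d: "tp d1 + tp d2 = 1"
    and lu: "length u2 = length u1" and lw: "length w2 = length w1" and v: "val (u1@[a]@w1) = 1"
  shows "E (u1 @ [a+d1, a+d2] @ w1) (u2 @ [b+d1, b+d2] @ w2) = E (u1@[a]@w1) (u2@[b]@w2)"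
proof (rule sym, rule E_ext)
  define n where "n = length u1"
  have ta: "tp (a+d1) + tp (a+d2) = tp a" using tp_d[OF d] .
  have tb: "tp (b+d1) + tp (b+d2) = tp b" using tp_d[OF d] .
  show "length (u2 @ [b+d1, b+d2] @ w2) = length (u1 @ [a+d1, a+d2] @ w1)" using lu lw by simp
  show "val (u1 @ [a+d1, a+d2] @ w1) = 1" using v ta by simp
  show "E (u1@[a]@w1) (u2@[b]@w2) t = t" if "t < 0 \<or> t > 1" for t
    using E_out[OF v that] .
  have le: "length (u2@[b]@w2) = length (u1@[a]@w1)" using lu lw by simp
  fix i t
  assume i: "i < length (u1 @ [a+d1, a+d2] @ w1)"
    and t1: "pos (u1 @ [a+d1, a+d2] @ w1) i \<le> t"
    and t2: "t \<le> pos (u1 @ [a+d1, a+d2] @ w1) i + tp ((u1 @ [a+d1, a+d2] @ w1)!i)"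
  show "E (u1@[a]@w1) (u2@[b]@w2) t = pos (u2 @ [b+d1, b+d2] @ w2) i +
          tp ((u2 @ [b+d1, b+d2] @ w2)!i - (u1 @ [a+d1, a+d2] @ w1)!i) * (t - pos (u1 @ [a+d1, a+d2] @ w1) i)"
  proof -
    consider (lt) "i < n" | (eq) "i = n" | (eq1) "i = Suc n" | (gt) k where "i = n + 2 + k" "k < length w1"
    proof -
      have "i < n \<or> i = n \<or> i = Suc n \<or> (n + 2 \<le> i \<and> i - (n+2) < length w1)" using i n_def by auto
      then show ?thesis using that by (metis le_add_diff_inverse)
    qed
    then show ?thesis
    proof cases
      case lt
      have "E (u1@[a]@w1) (u2@[b]@w2) t = pos (u2@[b]@w2) i + tp ((u2@[b]@w2)!i - (u1@[a]@w1)!i) * (t - pos (u1@[a]@w1) i)"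
        using lt t1 t2 n_def lu by (intro E_piece[OF le]) (auto simp: pos_app_left nth_append)
      then show ?thesis using lt n_def lu by (simp add: pos_app_left nth_append)
    next
      case eq
      have p1: "pos (u1 @ [a+d1, a+d2] @ w1) i = val u1" using eq n_def pos_app_right[of u1 _ 0] by simp
      have p2: "pos (u2 @ [b+d1, b+d2] @ w2) i = val u2" using eq n_def lu pos_app_right[of u2 _ 0] by simp
      have q1: "pos (u1@[a]@w1) n = val u1" using n_def pos_app_right[of u1 _ 0] by simp
      have q2: "pos (u2@[b]@w2) n = val u2" using n_def lu pos_app_right[of u2 _ 0] by simp
      have x1: "(u1 @ [a+d1, a+d2] @ w1)!i = a + d1" using eq n_def by (simp add: nth_append)
      have x2: "(u2 @ [b+d1, b+d2] @ w2)!i = b + d1" using eq n_def lu by (simp add: nth_append)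
      have "E (u1@[a]@w1) (u2@[b]@w2) t = val u2 + tp (b - a) * (t - val u1)"
        using E_piece[OF le, of n t] t1 t2 p1 q1 q2 x1 ta tp_pos[of "a+d2"] n_def lu by (simp add: nth_append)
      then show ?thesis using p1 p2 x1 x2 by simp
    next
      case eq1
      have p1: "pos (u1 @ [a+d1, a+d2] @ w1) i = val u1 + tp (a+d1)" using eq1 n_def pos_app_right[of u1 _ 1] by simp
      have p2: "pos (u2 @ [b+d1, b+d2] @ w2) i = val u2 + tp (b+d1)" using eq1 n_def lu pos_app_right[of u2 _ 1] by simp
      have q1: "pos (u1@[a]@w1) n = val u1" using n_def pos_app_right[of u1 _ 0] by simp
      have q2: "pos (u2@[b]@w2) n = val u2" using n_def lu pos_app_right[of u2 _ 0] by simp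
      have x1: "(u1 @ [a+d1, a+d2] @ w1)!i = a + d2" using eq1 n_def by (simp add: nth_append)
      have x2: "(u2 @ [b+d1, b+d2] @ w2)!i = b + d2" using eq1 n_def lu by (simp add: nth_append)
      have "E (u1@[a]@w1) (u2@[b]@w2) t = val u2 + tp (b - a) * (t - val u1)"
        using E_piece[OF le, of n t] t1 t2 p1 q1 q2 x1 ta tp_pos[of "a+d1"] n_def lu by (simp add: nth_append)
      moreover have "tp (b - a) * tp (a + d1) = tp (b + d1)" using tp_add[of "b-a" "a+d1"] by simp
      ultimately show ?thesis using p1 p2 x1 x2 by (simp add: algebra_simps)
    next
      case (gt k)
      have p1: "pos (u1 @ [a+d1, a+d2] @ w1) i = val u1 + tp a + pos w1 k"
        using gt n_def pos_app_right[of u1 _ "Suc (Suc k)"] ta by simp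
      have p2: "pos (u2 @ [b+d1, b+d2] @ w2) i = val u2 + tp b + pos w2 k"
        using gt n_def lu pos_app_right[of u2 _ "Suc (Suc k)"] tb by simp
      have q1: "pos (u1@[a]@w1) (n + 1 + k) = val u1 + tp a + pos w1 k" using n_def pos_app_right[of u1 _ "Suc k"] by simp
      have q2: "pos (u2@[b]@w2) (n + 1 + k) = val u2 + tp b + pos w2 k" using n_def lu pos_app_right[of u2 _ "Suc k"] by simp
      have x1: "(u1 @ [a+d1, a+d2] @ w1)!i = w1!k" using gt n_def by (simp add: nth_append)
      have x2: "(u2 @ [b+d1, b+d2] @ w2)!i = w2!k" using gt n_def lu by (simp add: nth_append)
      have y1: "(u1@[a]@w1)!(n+1+k) = w1!k" using n_def by (simp add: nth_append)
      have y2: "(u2@[b]@w2)!(n+1+k) = w2!k" using n_def lu by (simp add: nth_append)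
      have "E (u1@[a]@w1) (u2@[b]@w2) t = pos (u2@[b]@w2) (n+1+k) + tp ((u2@[b]@w2)!(n+1+k) - (u1@[a]@w1)!(n+1+k)) * (t - pos (u1@[a]@w1) (n+1+k))"
        using t1 t2 p1 q1 x1 y1 gt n_def by (intro E_piece[OF le]) auto
      then show ?thesis using p1 p2 q1 q2 x1 x2 y1 y2 by simp
    qed
  qed
qed

definition spl :: "bool \<Rightarrow> int \<Rightarrow> int list" where
  "spl c a = (if c then [a+2, a+1] else [a+1, a+2])"

lemma val_spl[simp]: "val (spl c a) = tp a"
  using tp_split[of a] tp_split'[of a] by (simp add: spl_def)

lemma length_spl[simp]: "length (spl c a) = 2" by (simp add: spl_def)

lemma tp12: "tp 2 + tp 1 = 1" using tp_split[of 0] by simp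

lemma E_refine:
  assumes lu: "length u2 = length u1" and lw: "length w2 = length w1" and v: "val (u1@[a]@w1) = 1"
  shows "E (u1 @ spl c a @ w1) (u2 @ spl c b @ w2) = E (u1@[a]@w1) (u2@[b]@w2)"
proof (cases c)
  case True then show ?thesis using E_refine_gen[OF tp12 lu lw v] by (simp add: spl_def)
next
  case False
  have "tp 1 + tp 2 = 1" using tp12 by simp
  then show ?thesis using E_refine_gen[OF _ lu lw v] False by (simp add: spl_def)
qed

definition sp :: "bool \<Rightarrow> nat \<Rightarrow> int list \<Rightarrow> int list" where
  "sp c j e = take j e @ spl c (e!j) @ drop (Suc j) e"

lemma sp_app: "length u = j \<Longrightarrow> sp c j (u @ a # w) = u @ spl c a @ w"
  by (simp add: sp_def nth_append)

lemma decomp: "j < length e \<Longrightarrow> e = take j e @ [e!j] @ drop (Suc j) e \<and> length (take j e) = j"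
  by (simp add: id_take_nth_drop[symmetric])

lemma sp_append: "j < length u \<Longrightarrow> sp c j (u @ v) = sp c j u @ v"
  by (simp add: sp_def nth_append)

lemma val_sp[simp]: "j < length e \<Longrightarrow> val (sp c j e) = val e"
  using decomp[of j e] by (metis sp_app val_simps(2) val_simps(3) val_spl append_Cons append_Nil)

lemma length_sp[simp]: "j < length e \<Longrightarrow> length (sp c j e) = Suc (length e)"
  by (simp add: sp_def)

lemma E_refine_sp:
  assumes j: "j < length e1" and l: "length e2 = length e1" and v: "val e1 = 1"
  shows "E (sp c j e1) (sp c j e2) = E e1 e2"
proof -
  have d1: "e1 = take j e1 @ [e1!j] @ drop (Suc j) e1" "length (take j e1) = j" using decomp[OF j] by auto
  have d2: "e2 = take j e2 @ [e2!j] @ drop (Suc j) e2" "length (take j e2) = j" using decomp[of j e2] j l by auto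
  have "E (take j e1 @ spl c (e1!j) @ drop (Suc j) e1) (take j e2 @ spl c (e2!j) @ drop (Suc j) e2)
      = E (take j e1 @ [e1!j] @ drop (Suc j) e1) (take j e2 @ [e2!j] @ drop (Suc j) e2)"
    using d1 d2 l v by (intro E_refine) auto
  then show ?thesis using d1 d2 by (simp add: sp_def)
qed



fun lexp :: "ctree \<Rightarrow> int \<Rightarrow> int list" where
  "lexp Leaf k = [k]"
| "lexp (XC l r) k = lexp l (k+2) @ lexp r (k+1)"
| "lexp (YC l r) k = lexp l (k+1) @ lexp r (k+2)"

lemma val_lexp[simp]: "val (lexp T k) = tp k"
  by (induction T arbitrary: k) (auto simp: tp_split tp_split')

lemma leaves_mkpos: "leaves T p k = mkpos p (lexp T k)"
  by (induction T arbitrary: p k) (auto simp: mkpos_append tp_def)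

lemma length_lexp[simp]: "length (lexp T k) = nleaves T"
  by (induction T arbitrary: k) auto

lemma lexp_replace:
  "i < nleaves T \<Longrightarrow> lexp (replace_leaf T i S) k = take i (lexp T k) @ lexp S (lexp T k ! i) @ drop (Suc i) (lexp T k)"
  by (induction T arbitrary: i k) (auto simp: nth_append Suc_diff_le)

lemma nleaves_spine[simp]: "nleaves (spine n) = Suc n" by (induction n) auto

definition P :: "nat \<Rightarrow> int list" where "P m = map (\<lambda>i. int i + 2) [0..<m]"

lemma length_P[simp]: "length (P m) = m" by (simp add: P_def)
lemma P_Suc: "P (Suc m) = P m @ [int m + 2]" by (simp add: P_def)

lemma lexp_spine: "lexp (spine m) k = map (\<lambda>i. k + int i + 2) [0..<m] @ [k + int m]"
proof (induction m arbitrary: k)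
  case 0 then show ?case by simp
next
  case (Suc m)
  have "[0..<Suc m] = 0 # map Suc [0..<m]" by (simp add: map_Suc_upt upt_conv_Cons)
  then show ?case using Suc by (simp add: algebra_simps)
qed

definition std :: "nat \<Rightarrow> int list" where "std m = lexp (spine m) 0"

lemma std_eq: "std m = P m @ [int m]" by (simp add: std_def lexp_spine P_def)
lemma std_Suc: "std (Suc m) = P m @ [int m + 2, int m + 1]" by (simp add: std_eq P_Suc)
lemma std_SS: "std (Suc (Suc m)) = P m @ [int m + 2, int m + 3, int m + 2]" by (simp add: std_eq P_Suc algebra_simps)
lemma val_std[simp]: "val (std m) = 1" by (simp add: std_def tp_def)
lemma length_std[simp]: "length (std m) = Suc m" by (simp add: std_eq)

lemma gen_E: "gen (c, n) = E (sp c n (std (Suc n))) (std (Suc (Suc n)))"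
proof -
  have nl: "nleaves (spine (Suc n)) = n + 2" using length_lexp[of "spine (Suc n)" 0] length_std[of "Suc n"]
    by (simp add: std_def)
  have r: "lexp (replace_leaf (spine (Suc n)) n S) 0 = take n (std (Suc n)) @ lexp S (std (Suc n) ! n) @ drop (Suc n) (std (Suc n))" for S
    unfolding std_def by (rule lexp_replace) simp
  have "lexp (replace_leaf (spine (n+1)) n (if c then XC Leaf Leaf else YC Leaf Leaf)) 0 = sp c n (std (Suc n))"
    using r by (auto simp: sp_def spl_def)
  then show ?thesis
    by (cases c) (auto simp: gen_def xgen_def ygen_def tree_elem_eq leaves_mkpos E_def std_def)
qed

lemma gen_level: "n < m \<Longrightarrow> E (sp c n (std m)) (std (Suc m)) = gen (c, n)"
proof (induction m)
  case 0 then show ?case by simp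
next
  case (Suc m)
  show ?case
  proof (cases "n = m")
    case True then show ?thesis using gen_E by simp
  next
    case False
    then have nm: "n < m" using Suc by simp
    have a: "sp c n (std (Suc m)) = sp c n (P m) @ spl True (int m) @ []"
      using nm by (simp add: std_Suc sp_append spl_def)
    have b: "std (Suc (Suc m)) = (P m @ [int m + 2]) @ spl True (int m + 1) @ []"
      by (simp add: std_SS spl_def algebra_simps)
    have c: "sp c n (std m) = sp c n (P m) @ [int m] @ []" using nm by (simp add: std_eq sp_append)
    have d: "std (Suc m) = (P m @ [int m + 2]) @ [int m + 1] @ []" by (simp add: std_Suc)
    have v: "val (sp c n (P m) @ [int m] @ []) = 1" using c[symmetric] nm by simp
    have X: "E (sp c n (std (Suc m))) (std (Suc (Suc m))) = E (sp c n (P m) @ spl True (int m) @ []) ((P m @ [int m + 2]) @ spl True (int m + 1) @ [])"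
      by (simp only: a b)
    have Y: "E (sp c n (std m)) (std (Suc m)) = E (sp c n (P m) @ [int m] @ []) ((P m @ [int m + 2]) @ [int m + 1] @ [])"
      by (simp only: c d)
    have Z: "E (sp c n (P m) @ spl True (int m) @ []) ((P m @ [int m + 2]) @ spl True (int m + 1) @ []) = E (sp c n (P m) @ [int m] @ []) ((P m @ [int m + 2]) @ [int m + 1] @ [])"
      by (rule E_refine) (use nm v in auto)
    have "E (sp c n (std (Suc m))) (std (Suc (Suc m))) = E (sp c n (std m)) (std (Suc m))"
      using X Y Z by simp
    then show ?thesis using Suc.IH nm by simp
  qed
qed

lemma gen_bij: "bij (gen a)"
proof -
  obtain c n where a: "a = (c,n)" by (cases a)
  show ?thesis unfolding a gen_E by (rule E_bij) auto
qed

lemma inv_gen: "inv (gen (c,n)) = E (std (Suc (Suc n))) (sp c n (std (Suc n)))"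
  unfolding gen_E by (rule E_bij) auto

inductive_set G :: "(real \<Rightarrow> real) set" where
  G_id: "id \<in> G"
| G_gen: "g \<in> G \<Longrightarrow> gen a \<circ> g \<in> G"
| G_inv: "g \<in> G \<Longrightarrow> inv (gen a) \<circ> g \<in> G"

lemma G_bij: "g \<in> G \<Longrightarrow> bij g"
proof (induction rule: G.induct)
  case G_id show ?case using bij_id by (simp add: id_def)
next
  case (G_gen g a) show ?case using bij_comp[OF G_gen.IH gen_bij] .
next
  case (G_inv g a) show ?case using bij_comp[OF G_inv.IH bij_imp_bij_inv[OF gen_bij]] .
qed

lemma G_comp: "h \<in> G \<Longrightarrow> g \<in> G \<Longrightarrow> h \<circ> g \<in> G"
  by (induction rule: G.induct) (auto simp: o_assoc[symmetric] intro: G.intros)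

lemma gen_G: "gen a \<in> G" using G_gen[OF G_id, of a] by simp
lemma inv_gen_G: "inv (gen a) \<in> G" using G_inv[OF G_id, of a] by simp

lemma G_inverse: "g \<in> G \<Longrightarrow> inv g \<in> G"
proof (induction rule: G.induct)
  case G_id then show ?case using G.G_id by (metis inv_id)
next
  case (G_gen g a)
  have "inv (gen a \<circ> g) = inv g \<circ> inv (gen a)"
    using G_bij[OF G_gen.hyps] gen_bij by (simp add: o_inv_distrib)
  then show ?case using G_comp[OF G_gen.IH inv_gen_G] by metis
next
  case (G_inv g a)
  have "inv (inv (gen a) \<circ> g) = inv g \<circ> inv (inv (gen a))"
    using G_bij[OF G_inv.hyps] gen_bij by (simp add: o_inv_distrib bij_imp_bij_inv)
  also have "\<dots> = inv g \<circ> gen a" using gen_bij by (simp add: inv_inv_eq)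
  finally show ?case using G_comp[OF G_inv.IH gen_G] by metis
qed

lemma gmem: "j \<le> m \<Longrightarrow> E (sp c j (std m)) (std (Suc m)) \<in> G"
proof -
  assume jm: "j \<le> m"
  show ?thesis
  proof (cases "j < m")
    case True then show ?thesis using gen_level gen_G by simp
  next
    case False
    then have j: "j = m" using jm by simp
    show ?thesis
    proof (cases c)
      case True
      have "sp c j (std m) = std (Suc m)" using True j by (simp add: std_eq std_Suc sp_app spl_def P_Suc)
      then show ?thesis using E_id[of "std (Suc m)"] G_id by simp
    next
      case False
      have e1: "std (Suc (Suc m)) = P m @ spl False (int m + 1) @ [int m + 2]"
        by (simp add: std_SS spl_def algebra_simps)
      have e2: "sp False m (std (Suc m)) = P m @ spl False (int m + 2) @ [int m + 1]"
        by (simp add: std_Suc sp_app)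
      have e3: "sp False m (std m) = P m @ [int m + 1] @ [int m + 2]"
        by (simp add: std_eq sp_app spl_def)
      have e4: "std (Suc m) = P m @ [int m + 2] @ [int m + 1]" by (simp add: std_Suc)
      have v: "val (P m @ [int m + 1] @ [int m + 2]) = 1" using e3[symmetric] by simp
      have X: "inv (gen (False, m)) = E (P m @ spl False (int m + 1) @ [int m + 2]) (P m @ spl False (int m + 2) @ [int m + 1])"
        by (simp only: inv_gen e1 e2)
      have Y: "E (sp False m (std m)) (std (Suc m)) = E (P m @ [int m + 1] @ [int m + 2]) (P m @ [int m + 2] @ [int m + 1])"
        by (simp only: e3 e4)
      have Z: "E (P m @ spl False (int m + 1) @ [int m + 2]) (P m @ spl False (int m + 2) @ [int m + 1]) = E (P m @ [int m + 1] @ [int m + 2]) (P m @ [int m + 2] @ [int m + 1])"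
        by (rule E_refine) (use v in auto)
      have "inv (gen (False, m)) = E (sp False m (std m)) (std (Suc m))"
        using X Y Z by simp
      then show ?thesis using inv_gen_G False j by metis
    qed
  qed
qed

lemma decomp2:
  assumes "k < n" "n < length e"
  obtains u a v b w where "e = u @ a # v @ b # w" "length u = k" "length v = n - Suc k"
proof -
  define r where "r = drop (Suc k) e"
  have e: "e = take k e @ e!k # r" unfolding r_def using assms by (simp add: id_take_nth_drop)
  have rl: "n - Suc k < length r" unfolding r_def using assms by simp
  have r: "r = take (n - Suc k) r @ r!(n - Suc k) # drop (Suc (n - Suc k)) r"
    using rl by (simp add: id_take_nth_drop)
  show ?thesis
    apply (rule that[of "take k e" "e!k" "take (n - Suc k) r" "r!(n - Suc k)" "drop (Suc (n - Suc k)) r"])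
    using e r rl assms by auto
qed

lemma sp_comm:
  assumes "k < n" "n < length e"
  shows "sp t k (sp s n e) = sp s (Suc n) (sp t k e)"
proof -
  obtain u a v b w where e: "e = u @ a # v @ b # w" and l: "length u = k" "length v = n - Suc k"
    using decomp2[OF assms] by blast
  have l2: "length (u @ a # v) = n" using l assms by simp
  have "sp s n e = (u @ a # v) @ spl s b @ w" using sp_app[OF l2, of s b w] e by simp
  then have A: "sp t k (sp s n e) = u @ spl t a @ v @ spl s b @ w" using sp_app[OF l(1)] by simp
  have "sp t k e = u @ spl t a @ v @ b # w" using sp_app[OF l(1)] e by simp
  moreover have l3: "length (u @ spl t a @ v) = Suc n" using l assms by simp
  ultimately have B: "sp s (Suc n) (sp t k e) = u @ spl t a @ v @ spl s b @ w"
    using sp_app[OF l3, of s b w] by simp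
  show ?thesis using A B by simp
qed

lemma sp_yy:
  assumes "k < length e"
  shows "sp False k (sp False k e) = sp True (Suc k) (sp True k e)"
proof -
  have e: "e = take k e @ e!k # drop (Suc k) e" using assms by (simp add: id_take_nth_drop)
  define u where "u = take k e"
  define w where "w = drop (Suc k) e"
  define a where "a = e!k"
  have lu: "length u = k" using assms u_def by simp
  have e': "e = u @ a # w" using e u_def w_def a_def by simp
  have "sp False k e = u @ (a+1) # [a+2] @ w" using sp_app[OF lu] e' by (simp add: spl_def)
  then have A: "sp False k (sp False k e) = u @ [a+2, a+3, a+2] @ w" using sp_app[OF lu] by (simp add: spl_def algebra_simps)
  have "sp True k e = (u @ [a+2]) @ (a+1) # w" using sp_app[OF lu] e' by (simp add: spl_def)
  moreover have "length (u @ [a+2]) = Suc k" using lu by simp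
  ultimately have B: "sp True (Suc k) (sp True k e) = u @ [a+2, a+3, a+2] @ w"
    using sp_app[of "u @ [a+2]" "Suc k" True "a+1" w] by (simp add: spl_def algebra_simps)
  show ?thesis using A B by simp
qed

lemma R1:
  assumes kn: "k < n"
  shows "gen (t,k) \<circ> gen (s,n) = gen (s, Suc n) \<circ> gen (t,k)"
proof -
  define e where "e = std (Suc n)"
  have le: "length e = n + 2" by (simp add: e_def)
  have ve: "val e = 1" by (simp add: e_def)
  have a1: "gen (s,n) = E (sp t k (sp s n e)) (sp t k (std (Suc (Suc n))))"
    unfolding gen_E e_def using kn by (subst E_refine_sp) auto
  have a2: "gen (t,k) = E (sp t k (std (Suc (Suc n)))) (std (Suc (Suc (Suc n))))"
    using gen_level[of k "Suc (Suc n)" t] kn by simp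
  have L: "gen (t,k) \<circ> gen (s,n) = E (sp t k (sp s n e)) (std (Suc (Suc (Suc n))))"
    unfolding a1 a2 using kn le ve by (intro E_comp) auto
  have b1: "gen (t,k) = E (sp s (Suc n) (sp t k e)) (sp s (Suc n) (std (Suc (Suc n))))"
    using gen_level[of k "Suc n" t] kn le unfolding e_def by (subst E_refine_sp) auto
  have b2: "gen (s, Suc n) = E (sp s (Suc n) (std (Suc (Suc n)))) (std (Suc (Suc (Suc n))))"
    by (simp add: gen_E)
  have R: "gen (s, Suc n) \<circ> gen (t,k) = E (sp s (Suc n) (sp t k e)) (std (Suc (Suc (Suc n))))"
    unfolding b1 b2 using kn le ve by (intro E_comp) auto
  show ?thesis using L R sp_comm[of k n e t s] kn le by simp
qed

lemma R2: "gen (False,k) \<circ> gen (False,k) = gen (True, Suc k) \<circ> gen (True,k)"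
proof -
  define e where "e = std (Suc k)"
  have le: "length e = k + 2" by (simp add: e_def)
  have ve: "val e = 1" by (simp add: e_def)
  have a1: "gen (False,k) = E (sp False k (sp False k e)) (sp False k (std (Suc (Suc k))))"
    unfolding gen_E e_def by (subst E_refine_sp) auto
  have a2: "gen (False,k) = E (sp False k (std (Suc (Suc k)))) (std (Suc (Suc (Suc k))))"
    using gen_level[of k "Suc (Suc k)" False] by simp
  have L: "gen (False,k) \<circ> gen (False,k) = E (sp False k (sp False k e)) (std (Suc (Suc (Suc k))))"
    apply (subst (2) a1) apply (subst a2) using le ve by (intro E_comp) auto
  have b1: "gen (True,k) = E (sp True (Suc k) (sp True k e)) (sp True (Suc k) (std (Suc (Suc k))))"
    unfolding gen_E e_def by (subst E_refine_sp) auto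
  have b2: "gen (True, Suc k) = E (sp True (Suc k) (std (Suc (Suc k)))) (std (Suc (Suc (Suc k))))"
    by (simp add: gen_E)
  have R: "gen (True, Suc k) \<circ> gen (True,k) = E (sp True (Suc k) (sp True k e)) (std (Suc (Suc (Suc k))))"
    unfolding b1 b2 using le ve by (intro E_comp) auto
  show ?thesis using L R sp_yy[of k e] le by simp
qed



definition Rg :: "int list \<Rightarrow> bool" where "Rg e \<longleftrightarrow> E e (std (length e - 1)) \<in> G"

lemma Rg_step:
  assumes v: "val (u@[a]@w) = 1"
  shows "Rg (u@spl c a@w) \<longleftrightarrow> Rg (u@[a]@w)"
proof -
  define m where "m = length u + length w"
  define j where "j = length u"
  have jm: "j < length (std m)" by (simp add: m_def j_def)
  define u2 where "u2 = take j (std m)"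
  define b where "b = std m ! j"
  define w2 where "w2 = drop (Suc j) (std m)"
  have sm: "std m = u2 @ [b] @ w2" "length u2 = j" using decomp[OF jm] u2_def b_def w2_def by auto
  have lw: "length w2 = length w" using jm unfolding w2_def m_def j_def by simp
  have sps: "sp c j (std m) = u2 @ spl c b @ w2" by (simp add: sp_def u2_def b_def w2_def)
  define g where "g = E (sp c j (std m)) (std (Suc m))"
  have gG: "g \<in> G" unfolding g_def by (rule gmem) (simp add: m_def j_def)
  have r: "E (u@spl c a@w) (u2 @ spl c b @ w2) = E (u@[a]@w) (u2@[b]@w2)"
    by (rule E_refine) (use sm lw v j_def in auto)
  have v2: "val (u@spl c a@w) = 1" using v by simp
  have comp: "g \<circ> E (u@spl c a@w) (sp c j (std m)) = E (u@spl c a@w) (std (Suc m))"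
    unfolding g_def using jm v2 by (intro E_comp) (auto simp: m_def j_def)
  have key: "E (u@spl c a@w) (std (Suc m)) = g \<circ> E (u@[a]@w) (std m)"
    using comp r sps sm by simp
  have l1: "length (u@spl c a@w) - 1 = Suc m" by (simp add: m_def)
  have l2: "length (u@[a]@w) - 1 = m" by (simp add: m_def)
  have bg: "bij g" using G_bij[OF gG] .
  have inv: "inv g \<circ> (g \<circ> E (u@[a]@w) (std m)) = E (u@[a]@w) (std m)"
    by (simp only: o_assoc inv_o_cancel[OF bij_is_inj[OF bg]] id_o)
  show ?thesis
  proof
    assume "Rg (u@spl c a@w)"
    then have "g \<circ> E (u@[a]@w) (std m) \<in> G" using key l1 by (simp add: Rg_def)
    then have "inv g \<circ> (g \<circ> E (u@[a]@w) (std m)) \<in> G" using G_comp G_inverse[OF gG] by blast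
    then show "Rg (u@[a]@w)" using inv l2 by (simp add: Rg_def)
  next
    assume "Rg (u@[a]@w)"
    then have "g \<circ> E (u@[a]@w) (std m) \<in> G" using G_comp[OF gG] l2 by (simp add: Rg_def)
    then show "Rg (u@spl c a@w)" using key l1 by (simp add: Rg_def)
  qed
qed

lemma deep:
  fixes N :: int
  shows "a \<le> N \<Longrightarrow> \<exists>D. set D \<subseteq> {N, N+1} \<and> val D = tp a \<and>
           (\<forall>u w. val (u@[a]@w) = 1 \<longrightarrow> (Rg (u@[a]@w) \<longleftrightarrow> Rg (u@D@w)))"
proof (induction "nat (N - a)" arbitrary: a rule: less_induct)
  case less
  show ?case
  proof (cases "a = N")
    case True then show ?thesis by (intro exI[of _ "[a]"]) auto
  next
    case False
    then have aN: "a < N" using less.prems by simp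
    obtain D1 where D1: "set D1 \<subseteq> {N, N+1}" "val D1 = tp (a+1)"
        "\<forall>u w. val (u@[a+1]@w) = 1 \<longrightarrow> (Rg (u@[a+1]@w) \<longleftrightarrow> Rg (u@D1@w))"
      using less.hyps[of "a+1"] aN by auto
    obtain D2 where D2: "set D2 \<subseteq> {N, N+1}" "val D2 = tp (a+2)"
        "\<forall>u w. val (u@[a+2]@w) = 1 \<longrightarrow> (Rg (u@[a+2]@w) \<longleftrightarrow> Rg (u@D2@w))"
    proof (cases "a + 2 \<le> N")
      case True then show ?thesis using less.hyps[of "a+2"] that aN by auto
    next
      case False then have "a + 2 = N + 1" using aN by simp
      then show ?thesis using that[of "[a+2]"] by auto
    qed
    show ?thesis
    proof (intro exI[of _ "D1 @ D2"] conjI allI impI)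
      show "set (D1 @ D2) \<subseteq> {N, N+1}" using D1 D2 by auto
      show "val (D1 @ D2) = tp a" using D1 D2 tp_split'[of a] by simp
      fix u w assume v: "val (u@[a]@w) = 1"
      have v': "val u + tp a + val w = 1" using v by simp
      have e1: "val (u@[a+1]@([a+2]@w)) = val u + tp (a+1) + tp (a+2) + val w" by simp
      have e2: "val ((u@D1)@[a+2]@w) = val u + val D1 + tp (a+2) + val w" by simp
      have f1: "val (u@[a+1]@([a+2]@w)) = 1" using e1 v' tp_split'[of a] by linarith
      have f2: "val ((u@D1)@[a+2]@w) = 1" using e2 v' D1(2) tp_split'[of a] by linarith
      have "Rg (u@[a]@w) \<longleftrightarrow> Rg (u@spl False a@w)" using Rg_step[OF v] by simp
      also have "\<dots> \<longleftrightarrow> Rg (u@[a+1]@([a+2]@w))" by (simp add: spl_def)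
      also have "\<dots> \<longleftrightarrow> Rg (u@D1@([a+2]@w))" using D1(3) f1 by blast
      also have "\<dots> \<longleftrightarrow> Rg ((u@D1)@[a+2]@w)" by simp
      also have "\<dots> \<longleftrightarrow> Rg ((u@D1)@D2@w)" using D2(3) f2 by blast
      finally show "Rg (u@[a]@w) \<longleftrightarrow> Rg (u@(D1@D2)@w)" by simp
    qed
  qed
qed

lemma deep_list:
  fixes N :: int
  shows "\<forall>x\<in>set e. x \<le> N \<Longrightarrow> \<exists>D. set D \<subseteq> {N,N+1} \<and> val D = val e \<and>
           (\<forall>u w. val (u@e@w) = 1 \<longrightarrow> (Rg (u@e@w) \<longleftrightarrow> Rg (u@D@w)))"
proof (induction e)
  case Nil then show ?case by (intro exI[of _ "[]"]) auto
next
  case (Cons x e)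
  obtain Dx where Dx: "set Dx \<subseteq> {N, N+1}" "val Dx = tp x"
      "\<forall>u w. val (u@[x]@w) = 1 \<longrightarrow> (Rg (u@[x]@w) \<longleftrightarrow> Rg (u@Dx@w))"
    using deep[of x N] Cons.prems by auto
  obtain De where De: "set De \<subseteq> {N,N+1}" "val De = val e"
      "\<forall>u w. val (u@e@w) = 1 \<longrightarrow> (Rg (u@e@w) \<longleftrightarrow> Rg (u@De@w))"
    using Cons by auto
  show ?case
  proof (intro exI[of _ "Dx @ De"] conjI allI impI)
    show "set (Dx @ De) \<subseteq> {N, N+1}" using Dx De by auto
    show "val (Dx @ De) = val (x#e)" using Dx De by simp
    fix u w assume v: "val (u@(x#e)@w) = 1"
    have "Rg (u@(x#e)@w) \<longleftrightarrow> Rg (u@[x]@(e@w))" by simp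
    also have "\<dots> \<longleftrightarrow> Rg (u@Dx@(e@w))" using Dx(3) v by simp
    also have "\<dots> \<longleftrightarrow> Rg ((u@Dx)@e@w)" by simp
    also have "\<dots> \<longleftrightarrow> Rg ((u@Dx)@De@w)"
    proof -
      have "val ((u@Dx)@e@w) = val u + val Dx + val e + val w" by simp
      moreover have "val (u@(x#e)@w) = val u + tp x + val e + val w" by simp
      ultimately have "val ((u@Dx)@e@w) = 1" using v Dx(2) by linarith
      then show ?thesis using De(3) by blast
    qed
    finally show "Rg (u@(x#e)@w) \<longleftrightarrow> Rg (u@(Dx@De)@w)" by simp
  qed
qed

lemma swap:
  fixes N :: int
  assumes v: "val (u@[N+1,N]@w) = 1"
  shows "Rg (u@[N+1,N]@w) \<longleftrightarrow> Rg (u@[N,N+1]@w)"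
proof -
  have "tp (N - 1 + 2) + tp (N - 1 + 1) = tp (N-1)" by (rule tp_split)
  moreover have "N - 1 + 2 = N + 1" "N - 1 + 1 = N" by simp_all
  ultimately have t: "tp (N+1) + tp N = tp (N-1)" by simp
  have "val (u@[N+1,N]@w) = val u + tp (N+1) + tp N + val w" "val (u@[N-1]@w) = val u + tp (N-1) + val w" by simp_all
  then have v': "val (u@[N-1]@w) = 1" using v t by linarith
  have a: "spl True (N-1) = [N+1,N]" "spl False (N-1) = [N, N+1]" by (auto simp: spl_def)
  show ?thesis using Rg_step[OF v', of True] Rg_step[OF v', of False] a by simp
qed

lemma bubble:
  fixes N :: int
  shows "val (u@[N+1]@replicate A N@w) = 1 \<Longrightarrow>
     Rg (u@[N+1]@replicate A N@w) \<longleftrightarrow> Rg (u@replicate A N@[N+1]@w)"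
proof (induction A arbitrary: u)
  case 0 then show ?case by simp
next
  case (Suc A)
  have "Rg (u@[N+1]@replicate (Suc A) N@w) \<longleftrightarrow> Rg (u@[N+1,N]@(replicate A N@w))" by simp
  also have "\<dots> \<longleftrightarrow> Rg (u@[N,N+1]@(replicate A N@w))" using swap Suc.prems by simp
  also have "\<dots> \<longleftrightarrow> Rg ((u@[N])@[N+1]@replicate A N@w)" by simp
  also have "\<dots> \<longleftrightarrow> Rg ((u@[N])@replicate A N@[N+1]@w)" using Suc.IH[of "u@[N]"] Suc.prems by (simp add: algebra_simps)
  also have "\<dots> \<longleftrightarrow> Rg (u@replicate (Suc A) N@[N+1]@w)" by (simp add: replicate_app_Cons_same)
  finally show ?case .
qed

lemma val_replicate[simp]: "val (replicate n x) = real n * tp x"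
  by (induction n) (auto simp: algebra_simps)

lemma sortD:
  fixes N :: int
  shows "set D \<subseteq> {N,N+1} \<Longrightarrow> \<exists>A B. val D = real A * tp N + real B * tp (N+1) \<and>
      (\<forall>u w. val (u@D@w) = 1 \<longrightarrow> (Rg (u@D@w) \<longleftrightarrow> Rg (u@replicate A N@replicate B (N+1)@w)))"
proof (induction D)
  case Nil then show ?case by (intro exI[of _ 0]) auto
next
  case (Cons x D)
  obtain A B where AB: "val D = real A * tp N + real B * tp (N+1)"
      "\<forall>u w. val (u@D@w) = 1 \<longrightarrow> (Rg (u@D@w) \<longleftrightarrow> Rg (u@replicate A N@replicate B (N+1)@w))"
    using Cons by auto
  have x: "x = N \<or> x = N + 1" using Cons.prems by auto
  then show ?case
  proof
    assume xN: "x = N"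
    have c1: "val (x#D) = real (Suc A) * tp N + real B * tp (N+1)" using AB xN by (simp add: algebra_simps)
    have c2: "\<forall>u w. val (u@(x#D)@w) = 1 \<longrightarrow> (Rg (u@(x#D)@w) \<longleftrightarrow> Rg (u@replicate (Suc A) N@replicate B (N+1)@w))"
    proof (intro allI impI)
      fix u w assume v: "val (u@(x#D)@w) = 1"
      have "Rg (u@(x#D)@w) \<longleftrightarrow> Rg ((u@[x])@D@w)" by simp
      also have "\<dots> \<longleftrightarrow> Rg ((u@[x])@replicate A N@replicate B (N+1)@w)"
      proof -
        have "val ((u@[x])@D@w) = 1" using v by simp
        then show ?thesis using AB(2) by blast
      qed
      finally show "Rg (u@(x#D)@w) \<longleftrightarrow> Rg (u@replicate (Suc A) N@replicate B (N+1)@w)" using xN by simp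
    qed
    show ?thesis using c1 c2 by blast
  next
    assume xN: "x = N + 1"
    have c1: "val (x#D) = real A * tp N + real (Suc B) * tp (N+1)" using AB xN by (simp add: algebra_simps)
    have c2: "\<forall>u w. val (u@(x#D)@w) = 1 \<longrightarrow> (Rg (u@(x#D)@w) \<longleftrightarrow> Rg (u@replicate A N@replicate (Suc B) (N+1)@w))"
    proof (intro allI impI)
      fix u w assume v: "val (u@(x#D)@w) = 1"
      have "Rg (u@(x#D)@w) \<longleftrightarrow> Rg ((u@[x])@D@w)" by simp
      also have "\<dots> \<longleftrightarrow> Rg ((u@[x])@replicate A N@replicate B (N+1)@w)"
      proof -
        have "val ((u@[x])@D@w) = 1" using v by simp
        then show ?thesis using AB(2) by blast
      qed
      also have "\<dots> \<longleftrightarrow> Rg (u@[N+1]@replicate A N@(replicate B (N+1)@w))" using xN by simp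
      also have "\<dots> \<longleftrightarrow> Rg (u@replicate A N@[N+1]@(replicate B (N+1)@w))"
        using bubble[of u N A "replicate B (N+1)@w"] v AB(1) xN by (simp add: algebra_simps)
      finally show "Rg (u@(x#D)@w) \<longleftrightarrow> Rg (u@replicate A N@replicate (Suc B) (N+1)@w)" by simp
    qed
    show ?thesis using c1 c2 by blast
  qed
qed

lemma tau_irr_int: "real_of_int p = tau * real_of_int q \<Longrightarrow> q = 0"
proof (induction "nat \<bar>q\<bar>" arbitrary: p q rule: less_induct)
  case less
  show ?case
  proof (rule ccontr)
    assume q0: "q \<noteq> 0"
    have "\<bar>real_of_int p\<bar> = tau * \<bar>real_of_int q\<bar>" using less.prems tau_pos by (simp add: abs_mult)
    also have "\<dots> < \<bar>real_of_int q\<bar>" using q0 tau_lt1 by simp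
    finally have pq: "\<bar>p\<bar> < \<bar>q\<bar>" by linarith
    have "real_of_int (q - p) = tau * real_of_int p"
    proof -
      have t: "1 - tau = tau * tau" using tau_sq by simp
      have "real_of_int (q - p) = real_of_int q * (1 - tau)" using less.prems by (simp add: algebra_simps)
      also have "\<dots> = tau * (tau * real_of_int q)" using t by simp
      finally show ?thesis using less.prems by simp
    qed
    then have "p = 0" using less.hyps[of p "q - p"] pq by simp
    then show False using less.prems q0 tau_pos by simp
  qed
qed

lemma tau_indep:
  fixes A B A' B' :: nat
  assumes "real A * tp N + real B * tp (N+1) = real A' * tp N + real B' * tp (N+1)"
  shows "A = A' \<and> B = B'"
proof -
  have t: "tp (N+1) = tp N * tau" using tp_add[of N 1] tp_1 by simp
  have "tp N * (real A + real B * tau) = tp N * (real A' + real B' * tau)"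
    using assms t by (simp add: algebra_simps)
  then have "real A + real B * tau = real A' + real B' * tau" using tp_pos[of N] by simp
  then have "real_of_int (int A - int A') = tau * real_of_int (int B' - int B)" by (simp add: algebra_simps)
  then have "int B' - int B = 0" by (rule tau_irr_int)
  then have "B = B'" by simp
  then show ?thesis using \<open>real A + real B * tau = real A' + real B' * tau\<close> by simp
qed

lemma Rg_all: assumes v: "val e = 1" shows "Rg e"
proof -
  define N where "N = Max (insert 0 (set e))"
  have eN: "\<forall>x\<in>set e. x \<le> N" unfolding N_def by simp
  have zN: "\<forall>x\<in>set [0]. x \<le> N" unfolding N_def by simp
  obtain De where De: "set De \<subseteq> {N,N+1}" "val De = val e"
      "\<forall>u w. val (u@e@w) = 1 \<longrightarrow> (Rg (u@e@w) \<longleftrightarrow> Rg (u@De@w))"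
    using deep_list[OF eN] by blast
  obtain D0 where D0: "set D0 \<subseteq> {N,N+1}" "val D0 = val [0]"
      "\<forall>u w. val (u@[0]@w) = 1 \<longrightarrow> (Rg (u@[0]@w) \<longleftrightarrow> Rg (u@D0@w))"
    using deep_list[OF zN] by blast
  obtain A B where AB: "val De = real A * tp N + real B * tp (N+1)"
      "\<forall>u w. val (u@De@w) = 1 \<longrightarrow> (Rg (u@De@w) \<longleftrightarrow> Rg (u@replicate A N@replicate B (N+1)@w))"
    using sortD[OF De(1)] by blast
  obtain A' B' where AB': "val D0 = real A' * tp N + real B' * tp (N+1)"
      "\<forall>u w. val (u@D0@w) = 1 \<longrightarrow> (Rg (u@D0@w) \<longleftrightarrow> Rg (u@replicate A' N@replicate B' (N+1)@w))"
    using sortD[OF D0(1)] by blast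
  have z: "val [0] = 1" by simp
  have "real A * tp N + real B * tp (N+1) = real A' * tp N + real B' * tp (N+1)"
    using AB(1) AB'(1) De(2) D0(2) v z by linarith
  then have "A = A' \<and> B = B'" by (rule tau_indep)
  have r0: "Rg [0]" unfolding Rg_def using E_id[of "[0]"] G_id by (simp add: std_eq P_def)
  have "Rg e \<longleftrightarrow> Rg De" using De(3)[rule_format, of "[]" "[]"] v by simp
  also have "\<dots> \<longleftrightarrow> Rg (replicate A N@replicate B (N+1))" using AB(2)[rule_format, of "[]" "[]"] v De(2) by simp
  also have "\<dots> \<longleftrightarrow> Rg (replicate A' N@replicate B' (N+1))" using \<open>A = A' \<and> B = B'\<close> by simp
  also have "\<dots> \<longleftrightarrow> Rg D0" using AB'(2)[rule_format, of "[]" "[]"] D0(2) by simp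
  also have "\<dots> \<longleftrightarrow> Rg [0]" using D0(3)[rule_format, of "[]" "[]"] by simp
  finally show ?thesis using r0 by simp
qed

lemma E_in_G:
  assumes l: "length e2 = length e1" and v1: "val e1 = 1" and v2: "val e2 = 1"
  shows "E e1 e2 \<in> G"
proof -
  define m where "m = length e1 - 1"
  have ne: "e1 \<noteq> []" using v1 by auto
  have lm: "length (std m) = length e1" using ne by (simp add: m_def)
  have g1: "E e1 (std m) \<in> G" using Rg_all[OF v1] by (simp add: Rg_def m_def)
  have g2: "E e2 (std m) \<in> G" using Rg_all[OF v2] l by (simp add: Rg_def m_def)
  have "E e1 e2 = E (std m) e2 \<circ> E e1 (std m)" using E_comp[of "std m" e1 e2] lm l v1 by simp
  also have "E (std m) e2 = inv (E e2 (std m))" using E_bij(2)[of "std m" e2] lm l v2 by simp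
  finally show ?thesis using G_comp[OF G_inverse[OF g2] g1] by metis
qed



section \<open>Positive elements of Z[tau] are sums of powers of tau\<close>

lemma tp_succ: "tp (x + 1) = tau * tp x" using tp_add[of x 1] tp_1 by simp

lemma val_shift: "val (map (\<lambda>x. x + k) w) = tp k * val w"
  by (induction w) (auto simp: tp_add algebra_simps)

lemma pos_shift: "pos (map (\<lambda>x. x + k) w) j = tp k * pos w j"
proof (induction w arbitrary: j)
  case Nil then show ?case by (simp add: pos_def)
next
  case (Cons a w) then show ?case by (cases j) (simp_all add: tp_add algebra_simps)
qed

lemma val_shift1: "val (map (\<lambda>x. x + 1) w) = tau * val w"
  using val_shift[of 1 w] tp_1 by simp

lemma tausum_step:
  assumes H: "\<And>a b. \<bar>b\<bar> < \<bar>n\<bar> \<Longrightarrow> 0 < real_of_int a + real_of_int b * tau \<Longrightarrow> \<exists>w. val w = real_of_int a + real_of_int b * tau"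
    and pos: "real_of_int m + real_of_int n * tau > 0"
  shows "\<exists>w. val w = real_of_int m + real_of_int n * tau"
proof -
  have t2: "tp 2 = 1 - tau" using tau_sq tp_add[of 1 1] tp_1 by simp
  have mul: "real_of_int (m+n) + real_of_int m * tau = (real_of_int m + real_of_int n * tau) * (1 + tau)"
  proof -
    have "(real_of_int m + real_of_int n * tau) * (1 + tau) = real_of_int m + real_of_int m * tau + real_of_int n * (tau * tau + tau)"
      by (simp add: algebra_simps)
    then show ?thesis using tau_sq by simp
  qed
  have pos': "real_of_int (m+n) + real_of_int m * tau > 0" using mul pos tau_pos
    by (metis add_pos_pos mult_pos_pos zero_less_one)
  have step: "\<exists>w. val w = real_of_int m + real_of_int n * tau" if lt: "\<bar>m\<bar> < \<bar>n\<bar>"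
  proof -
    obtain w where w: "val w = real_of_int (m+n) + real_of_int m * tau"
      using H[OF lt pos'] by blast
    have "val (map (\<lambda>x. x + 1) w) = tau * (real_of_int (m+n) + real_of_int m * tau)"
      using val_shift1 w by simp
    also have "\<dots> = real_of_int m * (tau * tau + tau) + real_of_int n * tau" by (simp add: algebra_simps)
    finally show ?thesis using tau_sq by auto
  qed
  show ?thesis
  proof (cases "n \<ge> 0")
    case n0: True
    show ?thesis
    proof (cases "m \<ge> 0")
      case True
      have "val (replicate (nat m) 0 @ replicate (nat n) 1) = real_of_int m + real_of_int n * tau"
        using True n0 by (simp add: tp_1)
      then show ?thesis by blast
    next
      case False
      have "real_of_int (-m) < real_of_int n * tau" using pos by simp
      also have "\<dots> \<le> real_of_int n" using n0 tau_lt1 by (simp add: mult_left_le)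
      finally have "\<bar>m\<bar> < \<bar>n\<bar>" using False n0 by simp
      then show ?thesis using step by blast
    qed
  next
    case False
    then have n0: "n < 0" by simp
    have "real_of_int m > - (real_of_int n * tau)" using pos by simp
    moreover have "- (real_of_int n * tau) > 0" using n0 tau_pos by (simp add: mult_neg_pos)
    ultimately have m0: "m > 0" by linarith
    show ?thesis
    proof (cases "m + n \<ge> 0")
      case True
      have "val (replicate (nat (m+n)) 0 @ replicate (nat (-n)) 2) = real_of_int (m+n) + real_of_int (-n) * (1 - tau)"
        using True n0 t2 by simp
      also have "\<dots> = real_of_int m + real_of_int n * tau" by (simp add: algebra_simps)
      finally show ?thesis by blast
    next
      case False
      then have "\<bar>m\<bar> < \<bar>n\<bar>" using m0 n0 by simp
      then show ?thesis using step by blast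
    qed
  qed
qed

lemma tausum_N: "\<forall>m n. nat \<bar>n\<bar> \<le> N \<longrightarrow> real_of_int m + real_of_int n * tau > 0 \<longrightarrow> (\<exists>w. val w = real_of_int m + real_of_int n * tau)"
proof (induction N)
  case 0
  show ?case
  proof (intro allI impI)
    fix m n :: int assume z: "nat \<bar>n\<bar> \<le> 0" and p: "real_of_int m + real_of_int n * tau > 0"
    show "\<exists>w. val w = real_of_int m + real_of_int n * tau"
    proof (rule tausum_step[OF _ p])
      fix a' b' :: int assume "\<bar>b'\<bar> < \<bar>n\<bar>"
      then show "\<exists>w. val w = real_of_int a' + real_of_int b' * tau" using z by simp
    qed
  qed
next
  case (Suc N)
  show ?case
  proof (intro allI impI)
    fix m n :: int assume a: "nat \<bar>n\<bar> \<le> Suc N" "real_of_int m + real_of_int n * tau > 0"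
    show "\<exists>w. val w = real_of_int m + real_of_int n * tau"
    proof (rule tausum_step[OF _ a(2)])
      fix a' b' :: int assume "\<bar>b'\<bar> < \<bar>n\<bar>" "0 < real_of_int a' + real_of_int b' * tau"
      then show "\<exists>w. val w = real_of_int a' + real_of_int b' * tau" using Suc.IH a(1) by auto
    qed
  qed
qed

lemma tausum: "real_of_int m + real_of_int n * tau > 0 \<Longrightarrow> \<exists>w. val w = real_of_int m + real_of_int n * tau"
  using tausum_N[of "nat \<bar>n\<bar>"] by blast

lemma Ztau_diff: "a \<in> Ztau \<Longrightarrow> b \<in> Ztau \<Longrightarrow> b - a \<in> Ztau"
proof -
  assume "a \<in> Ztau" "b \<in> Ztau"
  then obtain i1 j1 i2 j2 where "a = of_int i1 + of_int j1 * tau" "b = of_int i2 + of_int j2 * tau"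
    unfolding Ztau_def by blast
  then have "b - a = of_int (i2 - i1) + of_int (j2 - j1) * tau" by (simp add: algebra_simps)
  then show ?thesis unfolding Ztau_def by blast
qed

lemma Ztau_sum: "d \<in> Ztau \<Longrightarrow> d > 0 \<Longrightarrow> \<exists>w. val w = d"
  unfolding Ztau_def using tausum by auto

section \<open>Elements of F_tau are given by pairs of exponent lists\<close>

lemma build:
  "sorted_wrt (<) (a # ps) \<Longrightarrow> set (a#ps) \<subseteq> Ztau \<Longrightarrow>
   (\<forall>i < length ps. \<exists>(k::int) (c::real). \<forall>t \<in> {(a#ps)!i .. (a#ps)!(Suc i)}. f t = tau powi k * t + c) \<Longrightarrow>
   \<exists>e1 e2. length e2 = length e1 \<and> val e1 = last (a#ps) - a \<and> val e2 = f (last (a#ps)) - f a \<and>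
     (\<forall>j < length e1. \<forall>t. a + pos e1 j \<le> t \<and> t \<le> a + pos e1 j + tp (e1!j) \<longrightarrow>
        f t = f a + pos e2 j + tp (e2!j - e1!j) * (t - a - pos e1 j))"
proof (induction ps arbitrary: a)
  case Nil then show ?case by (intro exI[of _ "[]"]) auto
next
  case (Cons b ps)
  have ab: "a < b" using Cons.prems(1) by simp
  have abZ: "b - a \<in> Ztau" using Cons.prems(2) by (intro Ztau_diff) auto
  obtain w where w: "val w = b - a" using Ztau_sum[OF abZ] ab by auto
  obtain k c where kc: "\<forall>t \<in> {a..b}. f t = tau powi k * t + c" using Cons.prems(3) by fastforce
  have IHp: "\<forall>i < length ps. \<exists>(k::int) (c::real). \<forall>t \<in> {(b#ps)!i .. (b#ps)!(Suc i)}. f t = tau powi k * t + c"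
  proof (intro allI impI)
    fix i assume "i < length ps"
    then show "\<exists>(k::int) (c::real). \<forall>t \<in> {(b#ps)!i .. (b#ps)!(Suc i)}. f t = tau powi k * t + c"
      using Cons.prems(3)[rule_format, of "Suc i"] by simp
  qed
  obtain e1 e2 where E: "length e2 = length e1" "val e1 = last (b#ps) - b" "val e2 = f (last (b#ps)) - f b"
     "\<forall>j < length e1. \<forall>t. b + pos e1 j \<le> t \<and> t \<le> b + pos e1 j + tp (e1!j) \<longrightarrow>
        f t = f b + pos e2 j + tp (e2!j - e1!j) * (t - b - pos e1 j)"
    using Cons.IH[of b] Cons.prems(1,2) IHp by auto
  define w2 where "w2 = map (\<lambda>x. x + k) w"
  have fa: "f a = tp k * a + c" using kc ab by (simp add: tp_def)
  have fb: "f b = tp k * b + c" using kc ab by (simp add: tp_def)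
  show ?case
  proof (rule exI[of _ "w @ e1"], rule exI[of _ "w2 @ e2"], intro conjI allI impI)
    show "length (w2 @ e2) = length (w @ e1)" using E by (simp add: w2_def)
    show "val (w @ e1) = last (a # b # ps) - a" using w E by simp
    have vw: "val w2 = tp k * (b - a)" using w val_shift[of k w] by (simp add: w2_def)
    have "val (w2 @ e2) = tp k * (b - a) + (f (last (b#ps)) - f b)" using E(3) vw by (simp del: last.simps)
    also have "\<dots> = f (last (b#ps)) - f a" using fa fb by (simp add: algebra_simps)
    finally show "val (w2 @ e2) = f (last (a # b # ps)) - f a" by simp
    fix j t assume j: "j < length (w @ e1)" and t: "a + pos (w @ e1) j \<le> t \<and> t \<le> a + pos (w @ e1) j + tp ((w @ e1) ! j)"
    show "f t = f a + pos (w2 @ e2) j + tp ((w2 @ e2) ! j - (w @ e1) ! j) * (t - a - pos (w @ e1) j)"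
    proof (cases "j < length w")
      case True
      have p1: "pos (w @ e1) j = pos w j" using True by (simp add: pos_append)
      have p2: "pos (w2 @ e2) j = tp k * pos w j" using True by (simp add: pos_append w2_def pos_shift)
      have x1: "(w @ e1) ! j = w ! j" using True by (simp add: nth_append)
      have x2: "(w2 @ e2) ! j = w ! j + k" using True by (simp add: nth_append w2_def)
      have "pos w j + tp (w!j) = pos w (Suc j)" using True by (simp add: pos_Suc)
      also have "\<dots> \<le> b - a" using pos_le_val[of w "Suc j"] w by simp
      finally have tb: "t \<le> b" using t p1 x1 by simp
      have ta: "a \<le> t" using t p1 pos_nonneg[of w j] by simp
      have ft: "f t = tp k * t + c" using kc ta tb by (simp add: tp_def)
      show ?thesis using ft fa p1 p2 x1 x2 by (simp add: algebra_simps)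
    next
      case False
      define j' where "j' = j - length w"
      have jj: "j = length w + j'" using False j'_def by simp
      have j': "j' < length e1" using j jj by simp
      have p1: "pos (w @ e1) j = (b - a) + pos e1 j'" using jj w by (simp add: pos_app_right)
      have p2: "pos (w2 @ e2) j = tp k * (b - a) + pos e2 j'"
        using jj w val_shift[of k w] pos_len[of "map (\<lambda>x. x + k) w"] by (simp add: w2_def pos_append)
      have x1: "(w @ e1) ! j = e1 ! j'" using jj by (simp add: nth_append)
      have x2: "(w2 @ e2) ! j = e2 ! j'" using jj by (simp add: nth_append w2_def)
      have "f t = f b + pos e2 j' + tp (e2!j' - e1!j') * (t - b - pos e1 j')"
        using E(4) j' t p1 x1 by simp
      then show ?thesis using p1 p2 x1 x2 fa fb by (simp add: algebra_simps)
    qed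
  qed
qed

lemma F_tau_E:
  assumes f: "f \<in> F_tau"
  shows "\<exists>e1 e2. length e2 = length e1 \<and> val e1 = 1 \<and> val e2 = 1 \<and> f = E e1 e2"
proof -
  obtain ps where ps: "length ps \<ge> 2" "sorted_wrt (<) ps" "hd ps = 0" "last ps = 1" "set ps \<subseteq> Ztau"
      "\<forall>i < length ps - 1. \<exists>(k::int) (c::real). \<forall>t \<in> {ps ! i .. ps ! (i+1)}. f t = tau powi k * t + c"
    using f unfolding F_tau_def by blast
  have sm: "strict_mono_on {0..1} f" and im: "f ` {0..1} = {0..1}" and out: "\<forall>t. t \<notin> {0..1} \<longrightarrow> f t = t"
    using f unfolding F_tau_def by blast+
  obtain ps' where ps': "ps = 0 # ps'" using ps(1,3) by (cases ps) auto
  have f0: "f 0 = 0"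
  proof -
    obtain s where s: "s \<in> {0..1}" "f s = 0" using im by (metis atLeastAtMost_iff image_iff order_refl zero_le_one)
    have "f 0 \<in> {0..1}" using im by auto
    show ?thesis
    proof (rule ccontr)
      assume "f 0 \<noteq> 0"
      then have "s \<noteq> 0" using s by auto
      then have "0 < s" using s by simp
      then have "f 0 < f s" using strict_mono_onD[OF sm, of 0 s] s by simp
      then show False using \<open>f 0 \<in> {0..1}\<close> s by simp
    qed
  qed
  have f1: "f 1 = 1"
  proof -
    obtain s where s: "s \<in> {0..1}" "f s = 1" using im by (metis atLeastAtMost_iff image_iff order_refl zero_le_one)
    have "f 1 \<in> {0..1}" using im by auto
    show ?thesis
    proof (rule ccontr)
      assume "f 1 \<noteq> 1"
      then have "s \<noteq> 1" using s by auto
      then have "s < 1" using s by simp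
      then have "f s < f 1" using strict_mono_onD[OF sm, of s 1] s by simp
      then show False using \<open>f 1 \<in> {0..1}\<close> s by simp
    qed
  qed
  have hyp: "\<forall>i < length ps'. \<exists>(k::int) (c::real). \<forall>t \<in> {(0#ps')!i .. (0#ps')!(Suc i)}. f t = tau powi k * t + c"
    using ps(6) ps' by simp
  obtain e1 e2 where E: "length e2 = length e1" "val e1 = last (0#ps') - 0" "val e2 = f (last (0#ps')) - f 0"
     "\<forall>j < length e1. \<forall>t. 0 + pos e1 j \<le> t \<and> t \<le> 0 + pos e1 j + tp (e1!j) \<longrightarrow>
        f t = f 0 + pos e2 j + tp (e2!j - e1!j) * (t - 0 - pos e1 j)"
    using build[of 0 ps' f] ps ps' hyp by auto
  have v1: "val e1 = 1" using E(2) ps(4) ps' by simp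
  have v2: "val e2 = 1" using E(3) ps(4) ps' f0 f1 by simp
  have "f = E e1 e2"
  proof (rule E_ext[OF E(1) v1])
    fix t :: real assume "t < 0 \<or> t > 1" then show "f t = t" using out by auto
  next
    fix i t assume "i < length e1" "pos e1 i \<le> t" "t \<le> pos e1 i + tp (e1!i)"
    then show "f t = pos e2 i + tp (e2!i - e1!i) * (t - pos e1 i)" using E(4) f0 by simp
  qed
  then show ?thesis using E(1) v1 v2 by blast
qed



definition Pos :: "(bool \<times> nat) list \<Rightarrow> real \<Rightarrow> real" where "Pos as = gprod (map gen as)"

lemma gprod_append: "gprod (u @ v) = gprod v \<circ> gprod u"
  by (induction u) (auto simp: o_assoc)

lemma Pos_Nil[simp]: "Pos [] = id" by (simp add: Pos_def)
lemma Pos_Cons: "Pos (x # l) = Pos l \<circ> gen x" by (simp add: Pos_def)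
lemma Pos_snoc: "Pos (l @ [x]) = gen x \<circ> Pos l" by (simp add: Pos_def gprod_append)

lemma Pos_bij: "bij (Pos l)"
proof (induction l)
  case Nil show ?case by (simp only: Pos_Nil bij_id)
next
  case (Cons x l) show ?case unfolding Pos_Cons using bij_comp[OF gen_bij Cons.IH] .
qed

lemma neg_eq: "gprod (rev (map (\<lambda>b. inv (gen b)) bs)) = inv (Pos bs)"
proof (induction bs)
  case Nil then show ?case by (simp add: inv_id)
next
  case (Cons b bs)
  have "gprod (rev (map (\<lambda>b. inv (gen b)) (b # bs))) = inv (gen b) \<circ> gprod (rev (map (\<lambda>b. inv (gen b)) bs))"
    by (simp add: gprod_append)
  also have "\<dots> = inv (gen b) \<circ> inv (Pos bs)" using Cons by simp
  also have "\<dots> = inv (Pos bs \<circ> gen b)" using o_inv_distrib[OF Pos_bij gen_bij] by simp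
  finally show ?case by (simp only: Pos_Cons)
qed

lemma word_eq: "gprod (map gen as @ rev (map (\<lambda>b. inv (gen b)) bs)) = inv (Pos bs) \<circ> Pos as"
  by (simp add: gprod_append neg_eq Pos_def)

definition NF :: "(real \<Rightarrow> real) \<Rightarrow> bool" where
  "NF f \<longleftrightarrow> (\<exists>as bs. sorted (map snd as) \<and> sorted (map snd bs) \<and> f = inv (Pos bs) \<circ> Pos as)"

lemma conj1:
  assumes g: "bij g" and e: "g \<circ> h = h' \<circ> g"
  shows "h \<circ> inv g = inv g \<circ> h'"
proof
  fix t
  have "g (h (inv g t)) = h' (g (inv g t))" using fun_cong[OF e, of "inv g t"] by simp
  then have "g (h (inv g t)) = h' t" using g by (simp add: bij_is_surj surj_f_inv_f)
  then have "inv g (g (h (inv g t))) = inv g (h' t)" by simp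
  then show "(h \<circ> inv g) t = (inv g \<circ> h') t" using g by (simp add: bij_is_inj)
qed

lemma conj2:
  assumes p: "bij p" and q: "bij q" and e: "h \<circ> p = q \<circ> h"
  shows "h \<circ> inv p = inv q \<circ> h"
proof
  fix t
  have "h (p (inv p t)) = q (h (inv p t))" using fun_cong[OF e, of "inv p t"] by simp
  then have "h t = q (h (inv p t))" using p by (simp add: bij_is_surj surj_f_inv_f)
  then have "inv q (h t) = h (inv p t)" using q by (simp add: bij_is_inj)
  then show "(h \<circ> inv p) t = (inv q \<circ> h) t" by simp
qed

lemma D1: "snd b < snd a \<Longrightarrow> gen a \<circ> inv (gen b) = inv (gen b) \<circ> gen (fst a, Suc (snd a))"
  using R1[of "snd b" "snd a" "fst b" "fst a"] by (intro conj1 gen_bij) simp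

lemma D2: "snd a < snd b \<Longrightarrow> gen a \<circ> inv (gen b) = inv (gen (fst b, Suc (snd b))) \<circ> gen a"
  using R1[of "snd a" "snd b" "fst a" "fst b"] by (intro conj2 gen_bij) simp

lemma D3: "gen (True,k) \<circ> inv (gen (False,k)) = inv (gen (True, Suc k)) \<circ> gen (False,k)"
proof
  fix t
  let ?x = "gen (True,k)" and ?y = "gen (False,k)" and ?x' = "gen (True, Suc k)"
  have r: "?x' (?x s) = ?y (?y s)" for s using fun_cong[OF R2[of k], of s] by simp
  have "?x' (?x (inv ?y t)) = ?y t" using r[of "inv ?y t"] gen_bij by (simp add: bij_is_surj surj_f_inv_f)
  then have "inv ?x' (?x' (?x (inv ?y t))) = inv ?x' (?y t)" by simp
  then show "(?x \<circ> inv ?y) t = (inv ?x' \<circ> ?y) t" using gen_bij by (simp add: bij_is_inj)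
qed

lemma D4: "gen (False,k) \<circ> inv (gen (True,k)) = inv (gen (False,k)) \<circ> gen (True, Suc k)"
proof
  fix t
  let ?x = "gen (True,k)" and ?y = "gen (False,k)" and ?x' = "gen (True, Suc k)"
  have r: "?y (?y s) = ?x' (?x s)" for s using fun_cong[OF R2[of k], of s] by simp
  have "?y (?y (inv ?x t)) = ?x' t" using r[of "inv ?x t"] gen_bij by (simp add: bij_is_surj surj_f_inv_f)
  then have "inv ?y (?y (?y (inv ?x t))) = inv ?y (?x' t)" by simp
  then show "(?y \<circ> inv ?x) t = (inv ?y \<circ> ?x') t" using gen_bij by (simp add: bij_is_inj)
qed

lemma sortS:
  "sorted (map snd bs) \<Longrightarrow> \<exists>bs'. sorted (map snd bs') \<and> Pos (a # bs) = Pos bs' \<and>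
     (\<forall>m. m \<le> snd a \<and> (\<forall>y\<in>set bs. m \<le> snd y) \<longrightarrow> (\<forall>x\<in>set bs'. m \<le> snd x))"
proof (induction bs arbitrary: a)
  case Nil then show ?case by (intro exI[of _ "[a]"]) auto
next
  case (Cons b rest)
  show ?case
  proof (cases "snd a \<le> snd b")
    case True
    then show ?thesis using Cons.prems by (intro exI[of _ "a # b # rest"]) auto
  next
    case False
    define a' where "a' = (fst a, Suc (snd a))"
    have sr: "sorted (map snd rest)" using Cons.prems by simp
    obtain rest' where r: "sorted (map snd rest')" "Pos (a' # rest) = Pos rest'"
        "\<forall>m. m \<le> snd a' \<and> (\<forall>y\<in>set rest. m \<le> snd y) \<longrightarrow> (\<forall>x\<in>set rest'. m \<le> snd x)"
      using Cons.IH[OF sr, of a'] by blast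
    have rb: "\<forall>y\<in>set rest. snd b \<le> snd y" using Cons.prems by simp
    have sb: "\<forall>x\<in>set rest'. snd b \<le> snd x" using r(3) rb False a'_def by auto
    have "Pos (a # b # rest) = Pos rest \<circ> (gen b \<circ> gen a)" by (simp add: Pos_Cons o_assoc)
    also have "gen b \<circ> gen a = gen a' \<circ> gen b"
      using R1[of "snd b" "snd a" "fst b" "fst a"] False a'_def by simp
    also have "Pos rest \<circ> (gen a' \<circ> gen b) = Pos (b # rest')" using r(2) by (simp add: Pos_Cons o_assoc)
    finally have eq: "Pos (a # b # rest) = Pos (b # rest')" .
    show ?thesis
    proof (rule exI[of _ "b # rest'"], intro conjI)
      show "sorted (map snd (b # rest'))" using r(1) sb by simp
      show "Pos (a # b # rest) = Pos (b # rest')" by (rule eq)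
      show "\<forall>m. m \<le> snd a \<and> (\<forall>y\<in>set (b # rest). m \<le> snd y) \<longrightarrow> (\<forall>x\<in>set (b # rest'). m \<le> snd x)"
        using r(3) a'_def by auto
    qed
  qed
qed

lemma sortS':
  "sorted (map snd as) \<Longrightarrow> \<exists>as'. sorted (map snd as') \<and> gen a \<circ> Pos as = Pos as' \<and>
     (\<forall>M. (\<forall>y\<in>set as. snd y \<le> M) \<and> snd a \<le> M \<longrightarrow> (\<forall>x\<in>set as'. snd x \<le> Suc M))"
proof (induction as arbitrary: a rule: rev_induct)
  case Nil then show ?case by (intro exI[of _ "[a]"]) (auto simp: Pos_Cons)
next
  case (snoc z init)
  have si: "sorted (map snd init)" and zi: "\<forall>y\<in>set init. snd y \<le> snd z"
    using snoc.prems by (auto simp: sorted_append)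
  show ?case
  proof (cases "snd z \<le> snd a")
    case True
    show ?thesis
    proof (rule exI[of _ "init @ [z, a]"], intro conjI)
      show "sorted (map snd (init @ [z, a]))" using snoc.prems True zi by (auto simp: sorted_append)
      show "gen a \<circ> Pos (init @ [z]) = Pos (init @ [z, a])"
        using Pos_snoc[of "init @ [z]" a] by simp
      show "\<forall>M. (\<forall>y\<in>set (init @ [z]). snd y \<le> M) \<and> snd a \<le> M \<longrightarrow> (\<forall>x\<in>set (init @ [z, a]). snd x \<le> Suc M)"
        by auto
    qed
  next
    case False
    define z' where "z' = (fst z, Suc (snd z))"
    obtain init' where r: "sorted (map snd init')" "gen a \<circ> Pos init = Pos init'"
        "\<forall>M. (\<forall>y\<in>set init. snd y \<le> M) \<and> snd a \<le> M \<longrightarrow> (\<forall>x\<in>set init'. snd x \<le> Suc M)"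
      using snoc.IH[OF si, of a] by blast
    have b: "\<forall>x\<in>set init'. snd x \<le> Suc (snd z)" using r(3) zi False by auto
    have "gen a \<circ> Pos (init @ [z]) = (gen a \<circ> gen z) \<circ> Pos init" by (simp add: Pos_snoc o_assoc)
    also have "gen a \<circ> gen z = gen z' \<circ> gen a" using R1[of "snd a" "snd z" "fst a" "fst z"] False z'_def by simp
    also have "(gen z' \<circ> gen a) \<circ> Pos init = Pos (init' @ [z'])" using r(2) by (simp add: Pos_snoc comp_assoc)
    finally have eq: "gen a \<circ> Pos (init @ [z]) = Pos (init' @ [z'])" .
    show ?thesis
    proof (rule exI[of _ "init' @ [z']"], intro conjI)
      show "sorted (map snd (init' @ [z']))" using r(1) b z'_def by (auto simp: sorted_append)
      show "gen a \<circ> Pos (init @ [z]) = Pos (init' @ [z'])" by (rule eq)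
      show "\<forall>M. (\<forall>y\<in>set (init @ [z]). snd y \<le> M) \<and> snd a \<le> M \<longrightarrow> (\<forall>x\<in>set (init' @ [z']). snd x \<le> Suc M)"
      proof (intro allI impI)
        fix M assume M: "(\<forall>y\<in>set (init @ [z]). snd y \<le> M) \<and> snd a \<le> M"
        then have "snd z \<le> M" by simp
        then show "\<forall>x\<in>set (init' @ [z']). snd x \<le> Suc M" using b z'_def by auto
      qed
    qed
  qed
qed

lemma N1:
  "sorted (map snd as) \<Longrightarrow> sorted (map snd bs) \<Longrightarrow>
   \<exists>as' bs'. sorted (map snd as') \<and> sorted (map snd bs') \<and>
     gen a \<circ> (inv (Pos bs) \<circ> Pos as) = inv (Pos bs') \<circ> Pos as' \<and>
     (\<forall>m. (\<forall>y\<in>set bs. m \<le> snd y) \<longrightarrow> (\<forall>x\<in>set bs'. m \<le> snd x)) \<and>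
     (\<forall>m. snd a < m \<longrightarrow> (\<forall>y\<in>set bs. m \<le> snd y) \<longrightarrow> (\<forall>x\<in>set bs'. Suc m \<le> snd x))"
proof (induction bs arbitrary: a as)
  case Nil
  obtain as' where "sorted (map snd as')" "gen a \<circ> Pos as = Pos as'" using sortS'[OF Nil(1), of a] by blast
  then show ?case by (intro exI[of _ as'] exI[of _ "[]"]) (auto simp: inv_id)
next
  case (Cons b rest)
  have sr: "sorted (map snd rest)" and rb: "\<forall>y\<in>set rest. snd b \<le> snd y" using Cons.prems(2) by auto
  have invc: "inv (Pos (b # rest)) = inv (gen b) \<circ> inv (Pos rest)"
    using Pos_bij gen_bij by (simp add: Pos_Cons o_inv_distrib)
  have base: "gen a \<circ> (inv (Pos (b # rest)) \<circ> Pos as) = (gen a \<circ> inv (gen b)) \<circ> (inv (Pos rest) \<circ> Pos as)"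
    using invc by (simp add: comp_assoc)
  have invc2: "inv (gen x) \<circ> (inv (Pos l) \<circ> h) = inv (Pos (x # l)) \<circ> h" for x l h
    using o_inv_distrib[OF Pos_bij gen_bij, of l x] by (simp add: Pos_Cons comp_assoc)
  have "snd b < snd a \<or> snd a < snd b \<or> a = b \<or> (snd a = snd b \<and> fst a \<noteq> fst b)"
    by (cases a, cases b) auto
  then consider (lt) "snd b < snd a" | (gt) "snd a < snd b" | (eq) "a = b" | (xy) "snd a = snd b" "fst a \<noteq> fst b"
    by blast
  then show ?case
  proof cases
    case lt
    define a' where "a' = (fst a, Suc (snd a))"
    obtain as' rest' where r: "sorted (map snd as')" "sorted (map snd rest')"
        "gen a' \<circ> (inv (Pos rest) \<circ> Pos as) = inv (Pos rest') \<circ> Pos as'"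
        "\<forall>m. (\<forall>y\<in>set rest. m \<le> snd y) \<longrightarrow> (\<forall>x\<in>set rest'. m \<le> snd x)"
      using Cons.IH[OF Cons.prems(1) sr, of a'] by blast
    have "gen a \<circ> (inv (Pos (b # rest)) \<circ> Pos as) = (inv (gen b) \<circ> gen a') \<circ> (inv (Pos rest) \<circ> Pos as)"
      using base D1[OF lt] a'_def by simp
    also have "\<dots> = inv (gen b) \<circ> (gen a' \<circ> (inv (Pos rest) \<circ> Pos as))" by (simp only: comp_assoc)
    also have "\<dots> = inv (gen b) \<circ> (inv (Pos rest') \<circ> Pos as')" using r(3) by simp
    also have "\<dots> = inv (Pos (b # rest')) \<circ> Pos as'" by (rule invc2)
    finally have eq: "gen a \<circ> (inv (Pos (b # rest)) \<circ> Pos as) = inv (Pos (b # rest')) \<circ> Pos as'" .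
    have sb: "\<forall>x\<in>set rest'. snd b \<le> snd x" using r(4) rb by blast
    show ?thesis
    proof (rule exI[of _ as'], rule exI[of _ "b # rest'"], intro conjI)
      show "sorted (map snd as')" by (rule r(1))
      show "sorted (map snd (b # rest'))" using r(2) sb by simp
      show "gen a \<circ> (inv (Pos (b # rest)) \<circ> Pos as) = inv (Pos (b # rest')) \<circ> Pos as'" by (rule eq)
      show "\<forall>m. (\<forall>y\<in>set (b # rest). m \<le> snd y) \<longrightarrow> (\<forall>x\<in>set (b # rest'). m \<le> snd x)" using r(4) by auto
      show "\<forall>m. snd a < m \<longrightarrow> (\<forall>y\<in>set (b # rest). m \<le> snd y) \<longrightarrow> (\<forall>x\<in>set (b # rest'). Suc m \<le> snd x)"
        using lt by auto
    qed
  next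
    case gt
    define b' where "b' = (fst b, Suc (snd b))"
    obtain as' rest' where r: "sorted (map snd as')" "sorted (map snd rest')"
        "gen a \<circ> (inv (Pos rest) \<circ> Pos as) = inv (Pos rest') \<circ> Pos as'"
        "\<forall>m. (\<forall>y\<in>set rest. m \<le> snd y) \<longrightarrow> (\<forall>x\<in>set rest'. m \<le> snd x)"
        "\<forall>m. snd a < m \<longrightarrow> (\<forall>y\<in>set rest. m \<le> snd y) \<longrightarrow> (\<forall>x\<in>set rest'. Suc m \<le> snd x)"
      using Cons.IH[OF Cons.prems(1) sr, of a] by blast
    have "gen a \<circ> (inv (Pos (b # rest)) \<circ> Pos as) = (inv (gen b') \<circ> gen a) \<circ> (inv (Pos rest) \<circ> Pos as)"
      using base D2[OF gt] b'_def by simp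
    also have "\<dots> = inv (gen b') \<circ> (gen a \<circ> (inv (Pos rest) \<circ> Pos as))" by (simp only: comp_assoc)
    also have "\<dots> = inv (gen b') \<circ> (inv (Pos rest') \<circ> Pos as')" using r(3) by simp
    also have "\<dots> = inv (Pos (b' # rest')) \<circ> Pos as'" by (rule invc2)
    finally have eq: "gen a \<circ> (inv (Pos (b # rest)) \<circ> Pos as) = inv (Pos (b' # rest')) \<circ> Pos as'" .
    have sb: "\<forall>x\<in>set rest'. Suc (snd b) \<le> snd x" using r(5) rb gt by blast
    show ?thesis
    proof (rule exI[of _ as'], rule exI[of _ "b' # rest'"], intro conjI)
      show "sorted (map snd as')" by (rule r(1))
      show "sorted (map snd (b' # rest'))" using r(2) sb b'_def by simp
      show "gen a \<circ> (inv (Pos (b # rest)) \<circ> Pos as) = inv (Pos (b' # rest')) \<circ> Pos as'" by (rule eq)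
      show "\<forall>m. (\<forall>y\<in>set (b # rest). m \<le> snd y) \<longrightarrow> (\<forall>x\<in>set (b' # rest'). m \<le> snd x)"
        using r(4) b'_def by auto
      show "\<forall>m. snd a < m \<longrightarrow> (\<forall>y\<in>set (b # rest). m \<le> snd y) \<longrightarrow> (\<forall>x\<in>set (b' # rest'). Suc m \<le> snd x)"
        using r(5) b'_def by auto
    qed
  next
    case eq
    have "gen b \<circ> inv (gen b) = id" using gen_bij[of b] bij_is_surj surj_iff by blast
    then have "gen a \<circ> inv (gen b) = id" using eq by simp
    then have e: "gen a \<circ> (inv (Pos (b # rest)) \<circ> Pos as) = inv (Pos rest) \<circ> Pos as" using base by (simp only: id_o)
    show ?thesis
    proof (rule exI[of _ as], rule exI[of _ rest], intro conjI)
      show "sorted (map snd as)" by (rule Cons.prems(1))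
      show "sorted (map snd rest)" by (rule sr)
      show "gen a \<circ> (inv (Pos (b # rest)) \<circ> Pos as) = inv (Pos rest) \<circ> Pos as" by (rule e)
      show "\<forall>m. (\<forall>y\<in>set (b # rest). m \<le> snd y) \<longrightarrow> (\<forall>x\<in>set rest. m \<le> snd x)" by auto
      show "\<forall>m. snd a < m \<longrightarrow> (\<forall>y\<in>set (b # rest). m \<le> snd y) \<longrightarrow> (\<forall>x\<in>set rest. Suc m \<le> snd x)"
        using eq by auto
    qed
  next
    case xy
    obtain c d where cd: "gen a \<circ> inv (gen b) = inv (gen c) \<circ> gen d" "snd c \<ge> snd b" "snd d \<ge> snd b"
    proof (cases "fst a")
      case True
      obtain k where k: "a = (True,k)" "b = (False,k)" using True xy by (cases a, cases b) auto
      show ?thesis using that[of "(True, Suc k)" "(False, k)"] D3[of k] k by simp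
    next
      case False
      obtain k where k: "a = (False,k)" "b = (True,k)" using False xy by (cases a, cases b) auto
      show ?thesis using that[of "(False, k)" "(True, Suc k)"] D4[of k] k by simp
    qed
    obtain as' rest' where r: "sorted (map snd as')" "sorted (map snd rest')"
        "gen d \<circ> (inv (Pos rest) \<circ> Pos as) = inv (Pos rest') \<circ> Pos as'"
        "\<forall>m. (\<forall>y\<in>set rest. m \<le> snd y) \<longrightarrow> (\<forall>x\<in>set rest'. m \<le> snd x)"
      using Cons.IH[OF Cons.prems(1) sr, of d] by blast
    obtain bs'' where s: "sorted (map snd bs'')" "Pos (c # rest') = Pos bs''"
        "\<forall>m. m \<le> snd c \<and> (\<forall>y\<in>set rest'. m \<le> snd y) \<longrightarrow> (\<forall>x\<in>set bs''. m \<le> snd x)"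
      using sortS[OF r(2), of c] by blast
    have "gen a \<circ> (inv (Pos (b # rest)) \<circ> Pos as) = (inv (gen c) \<circ> gen d) \<circ> (inv (Pos rest) \<circ> Pos as)"
      using base cd(1) by simp
    also have "\<dots> = inv (gen c) \<circ> (gen d \<circ> (inv (Pos rest) \<circ> Pos as))" by (simp only: comp_assoc)
    also have "\<dots> = inv (gen c) \<circ> (inv (Pos rest') \<circ> Pos as')" using r(3) by simp
    also have "\<dots> = inv (Pos (c # rest')) \<circ> Pos as'" by (rule invc2)
    also have "\<dots> = inv (Pos bs'') \<circ> Pos as'" using s(2) by simp
    finally have eq: "gen a \<circ> (inv (Pos (b # rest)) \<circ> Pos as) = inv (Pos bs'') \<circ> Pos as'" .
    show ?thesis
    proof (rule exI[of _ as'], rule exI[of _ bs''], intro conjI)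
      show "sorted (map snd as')" by (rule r(1))
      show "sorted (map snd bs'')" by (rule s(1))
      show "gen a \<circ> (inv (Pos (b # rest)) \<circ> Pos as) = inv (Pos bs'') \<circ> Pos as'" by (rule eq)
      show "\<forall>m. (\<forall>y\<in>set (b # rest). m \<le> snd y) \<longrightarrow> (\<forall>x\<in>set bs''. m \<le> snd x)"
      proof (intro allI impI)
        fix m assume m: "\<forall>y\<in>set (b # rest). m \<le> snd y"
        then have "m \<le> snd c" using cd(2) by auto
        moreover have "\<forall>y\<in>set rest'. m \<le> snd y" using r(4) m by auto
        ultimately show "\<forall>x\<in>set bs''. m \<le> snd x" using s(3) by blast
      qed
      show "\<forall>m. snd a < m \<longrightarrow> (\<forall>y\<in>set (b # rest). m \<le> snd y) \<longrightarrow> (\<forall>x\<in>set bs''. Suc m \<le> snd x)"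
        using xy by auto
    qed
  qed
qed

lemma invc2: "inv (gen x) \<circ> (inv (Pos l) \<circ> h) = inv (Pos (x # l)) \<circ> h"
  using o_inv_distrib[OF Pos_bij gen_bij, of l x] by (simp add: Pos_Cons comp_assoc)

lemma G_NF: "g \<in> G \<Longrightarrow> NF g"
proof (induction rule: G.induct)
  case G_id
  show ?case unfolding NF_def by (rule exI[of _ "[]"], rule exI[of _ "[]"]) (simp add: inv_id)
next
  case (G_gen g a)
  then obtain as bs where ab: "sorted (map snd as)" "sorted (map snd bs)" "g = inv (Pos bs) \<circ> Pos as"
    unfolding NF_def by blast
  obtain as' bs' where "sorted (map snd as')" "sorted (map snd bs')"
      "gen a \<circ> (inv (Pos bs) \<circ> Pos as) = inv (Pos bs') \<circ> Pos as'"
    using N1[OF ab(1,2), of a] by blast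
  then have "NF (gen a \<circ> g)" unfolding NF_def using ab(3) by blast
  then show ?case by (simp add: comp_def)
next
  case (G_inv g a)
  then obtain as bs where ab: "sorted (map snd as)" "sorted (map snd bs)" "g = inv (Pos bs) \<circ> Pos as"
    unfolding NF_def by blast
  obtain bs' where s: "sorted (map snd bs')" "Pos (a # bs) = Pos bs'" using sortS[OF ab(2), of a] by blast
  have "inv (gen a) \<circ> g = inv (Pos (a # bs)) \<circ> Pos as"
    using ab(3) invc2 by simp
  then have "NF (inv (gen a) \<circ> g)" unfolding NF_def using ab(1) s by metis
  then show ?case by (simp add: comp_def)
qed

theorem mainTheorem12:
  assumes "f \<in> F_tau"
  shows "\<exists>as bs :: (bool \<times> nat) list.
           sorted (map snd as) \<and> sorted (map snd bs) \<and>
           f = gprod (map gen as @ rev (map (\<lambda>b. inv (gen b)) bs))"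
proof -
  obtain e1 e2 where e: "length e2 = length e1" "val e1 = 1" "val e2 = 1" "f = E e1 e2"
    using F_tau_E[OF assms] by blast
  have "f \<in> G" using E_in_G[OF e(1-3)] e(4) by simp
  then have "NF f" by (rule G_NF)
  then show ?thesis unfolding NF_def word_eq by blast
qed


end
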